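(* $\mathcal D_{(11,0,1)}$ is a variety biregular to $\mathbb P^2\times\mathbb P^1$; in particular it is irreducible and smooth. The same holds for $\mathcal D_{(1,0,11)}$.
   Context: $\mathbb P^7$ is the projective space of nonzero polynomials $\sum_{0\le i,j\le2,(i,j)\ne(2,2)}a_{ij}z^iw^j$ up to scalars. $\mathcal D_{(11,0,1)}\subset\mathbb P^7$ is the set of classes of nonzero cubics $(a_1z+c_1)(a_2z+c_2)(b_3w+c_3)$, and $\mathcal D_{(1,0,11)}\subset\mathbb P^7$ the set of classes of nonzero cubics $(a_1z+c_1)(b_2w+c_2)(b_3w+c_3)$ (complex parameters). *)

theory Defs
  imports "HOL-Analysis.Analysis" "HOL-Computational_Algebra.Polynomial"
begin

text \<open>Homogeneous coordinate vectors for the index set I: functions vanishing outside I.\<close>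
definition vecs :: "'i set \<Rightarrow> ('i \<Rightarrow> complex) set" where
  "vecs I = {v. \<forall>i. i \<notin> I \<longrightarrow> v i = 0}"

definition pclass :: "('i \<Rightarrow> complex) \<Rightarrow> ('i \<Rightarrow> complex) set" where
  "pclass v = {(\<lambda>i. c * v i) | c. c \<noteq> 0}"

definition Proj :: "'i set \<Rightarrow> ('i \<Rightarrow> complex) set set" where
  "Proj I = pclass ` (vecs I - {\<lambda>_. 0})"

inductive_set polyfun :: "'i set \<Rightarrow> (('i \<Rightarrow> complex) \<Rightarrow> complex) set" for I where
  const: "(\<lambda>v. c) \<in> polyfun I"
| var: "i \<in> I \<Longrightarrow> (\<lambda>v. v i) \<in> polyfun I"
| add: "f \<in> polyfun I \<Longrightarrow> g \<in> polyfun I \<Longrightarrow> (\<lambda>v. f v + g v) \<in> polyfun I"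
| mult: "f \<in> polyfun I \<Longrightarrow> g \<in> polyfun I \<Longrightarrow> (\<lambda>v. f v * g v) \<in> polyfun I"

definition homog :: "'i set \<Rightarrow> nat \<Rightarrow> (('i \<Rightarrow> complex) \<Rightarrow> complex) \<Rightarrow> bool" where
  "homog I d f \<longleftrightarrow> f \<in> polyfun I \<and> (\<forall>c v. f (\<lambda>i. c * v i) = c ^ d * f v)"

definition vanish :: "(('i \<Rightarrow> complex) \<Rightarrow> complex) \<Rightarrow> ('i \<Rightarrow> complex) set \<Rightarrow> bool" where
  "vanish f p \<longleftrightarrow> (\<forall>v\<in>p. f v = 0)"

definition zariski_closed :: "'i set \<Rightarrow> ('i \<Rightarrow> complex) set set \<Rightarrow> bool" where
  "zariski_closed I X \<longleftrightarrow>
     (\<exists>F. finite F \<and> (\<forall>f\<in>F. \<exists>d. homog I d f) \<and> X = {p \<in> Proj I. \<forall>f\<in>F. vanish f p})"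

definition zariski_open_in :: "'i set \<Rightarrow> ('i \<Rightarrow> complex) set set \<Rightarrow> ('i \<Rightarrow> complex) set set \<Rightarrow> bool" where
  "zariski_open_in I X U \<longleftrightarrow> (\<exists>C. zariski_closed I C \<and> U = X - C)"

definition regular_map ::
  "'i set \<Rightarrow> 'j set \<Rightarrow> ('i \<Rightarrow> complex) set set \<Rightarrow>
   (('i \<Rightarrow> complex) set \<Rightarrow> ('j \<Rightarrow> complex) set) \<Rightarrow> bool" where
  "regular_map I J X \<phi> \<longleftrightarrow> X \<subseteq> Proj I \<and> \<phi> ` X \<subseteq> Proj J \<and>
     (\<forall>p\<in>X. \<exists>U g d. zariski_open_in I X U \<and> p \<in> U \<and> (\<forall>j\<in>J. homog I d (g j)) \<and>
        (\<forall>q\<in>U. \<forall>v\<in>q. (\<lambda>j. if j \<in> J then g j v else 0) \<noteq> (\<lambda>_. 0) \<and>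
                  \<phi> q = pclass (\<lambda>j. if j \<in> J then g j v else 0)))"

definition biregular ::
  "'i set \<Rightarrow> 'j set \<Rightarrow> ('i \<Rightarrow> complex) set set \<Rightarrow> ('j \<Rightarrow> complex) set set \<Rightarrow>
   (('i \<Rightarrow> complex) set \<Rightarrow> ('j \<Rightarrow> complex) set) \<Rightarrow> bool" where
  "biregular I J X Y \<phi> \<longleftrightarrow> bij_betw \<phi> X Y \<and> regular_map I J X \<phi> \<and>
     regular_map J I Y (the_inv_into X \<phi>)"

definition zar_irreducible :: "'i set \<Rightarrow> ('i \<Rightarrow> complex) set set \<Rightarrow> bool" where
  "zar_irreducible I X \<longleftrightarrow> X \<noteq> {} \<and>
     (\<forall>A B. zariski_closed I A \<and> zariski_closed I B \<and> X \<subseteq> A \<union> B \<longrightarrow> X \<subseteq> A \<or> X \<subseteq> B)"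

definition zar_dim :: "'i set \<Rightarrow> ('i \<Rightarrow> complex) set set \<Rightarrow> nat" where
  "zar_dim I X = (GREATEST n. \<exists>Z :: nat \<Rightarrow> ('i \<Rightarrow> complex) set set.
      (\<forall>k\<le>n. Z k \<subseteq> X \<and> zariski_closed I (Z k) \<and> zar_irreducible I (Z k)) \<and>
      (\<forall>k<n. Z k \<subset> Z (Suc k)))"

definition vanishing_homog :: "'i set \<Rightarrow> ('i \<Rightarrow> complex) set set \<Rightarrow> (('i \<Rightarrow> complex) \<Rightarrow> complex) set" where
  "vanishing_homog I X = {f. (\<exists>d. homog I d f) \<and> (\<forall>p\<in>X. vanish f p)}"

definition partial_fn :: "(('i \<Rightarrow> complex) \<Rightarrow> complex) \<Rightarrow> 'i \<Rightarrow> ('i \<Rightarrow> complex) \<Rightarrow> complex" where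
  "partial_fn f i v = deriv (\<lambda>t. f (v(i := v i + t))) 0"

text \<open>Smoothness via the Jacobian criterion: at each point, the Jacobian of the homogeneous
  ideal has rank (at least, hence exactly) the codimension.\<close>
definition zar_smooth :: "'i set \<Rightarrow> ('i \<Rightarrow> complex) set set \<Rightarrow> bool" where
  "zar_smooth I X \<longleftrightarrow> (\<forall>p\<in>X. \<forall>v\<in>p. \<exists>fs.
      length fs = card I - 1 - zar_dim I X \<and> set fs \<subseteq> vanishing_homog I X \<and>
      (\<forall>c :: nat \<Rightarrow> complex.
         (\<forall>i\<in>I. (\<Sum>k<length fs. c k * partial_fn (fs ! k) i v) = 0) \<longrightarrow>
         (\<forall>k<length fs. c k = 0)))"

text \<open>Index set of P^7: monomials z^i w^j, 0 \<le> i,j \<le> 2, (i,j) \<noteq> (2,2).\<close>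
definition P7idx :: "(nat \<times> nat) set" where
  "P7idx = {(i, j). i \<le> 2 \<and> j \<le> 2 \<and> (i, j) \<noteq> (2, 2)}"

text \<open>Bivariate polynomials as polynomials in w with coefficients polynomials in z;
  the coefficient of z^i w^j of P is coeff (coeff P j) i.\<close>
definition coeffvec :: "complex poly poly \<Rightarrow> (nat \<times> nat \<Rightarrow> complex)" where
  "coeffvec P = (\<lambda>(i, j). if (i, j) \<in> P7idx then coeff (coeff P j) i else 0)"

definition D_11_0_1 :: "(nat \<times> nat \<Rightarrow> complex) set set" where
  "D_11_0_1 = {pclass (coeffvec P) | P a1 c1 a2 c2 b3 c3.
      P = [:[:c1, a1:]:] * [:[:c2, a2:]:] * [:[:c3:], [:b3:]:] \<and> P \<noteq> 0}"

definition D_1_0_11 :: "(nat \<times> nat \<Rightarrow> complex) set set" where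
  "D_1_0_11 = {pclass (coeffvec P) | P a1 c1 b2 c2 b3 c3.
      P = [:[:c1, a1:]:] * [:[:c2:], [:b2:]:] * [:[:c3:], [:b3:]:] \<and> P \<noteq> 0}"

text \<open>P^2 x P^1 realised as a projective variety via the Segre embedding into P^5,
  with coordinates indexed by {0..2} x {0..1}.\<close>
definition Sidx :: "(nat \<times> nat) set" where
  "Sidx = {0..2} \<times> {0..1}"

definition segre_P2P1 :: "(nat \<times> nat \<Rightarrow> complex) set set" where
  "segre_P2P1 = {pclass (\<lambda>(i, j). if (i, j) \<in> Sidx then x i * y j else 0) | x y :: nat \<Rightarrow> complex.
      (\<exists>i\<le>2. x i \<noteq> 0) \<and> (\<exists>j\<le>1. y j \<noteq> 0)}"

end

theory Submission
  imports Defs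
begin

lemma pclass_mem_iff: "v \<in> pclass u \<longleftrightarrow> (\<exists>c. c \<noteq> 0 \<and> v = (\<lambda>i. c * u i))"
  unfolding pclass_def by blast

lemma pclass_self: "u \<in> pclass u"
  unfolding pclass_mem_iff by (rule exI[of _ 1]) simp

lemma pclass_scale: "c \<noteq> 0 \<Longrightarrow> pclass (\<lambda>i. c * u i) = pclass u"
proof -
  assume c: "c \<noteq> 0"
  show ?thesis
  proof (rule set_eqI)
    fix v
    show "v \<in> pclass (\<lambda>i. c * u i) \<longleftrightarrow> v \<in> pclass u"
      unfolding pclass_mem_iff
    proof
      assume "\<exists>d. d \<noteq> 0 \<and> v = (\<lambda>i. d * (c * u i))"
      then obtain d where "d \<noteq> 0" "v = (\<lambda>i. d * (c * u i))" by blast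
      thus "\<exists>d. d \<noteq> 0 \<and> v = (\<lambda>i. d * u i)" using c
        by (intro exI[of _ "d*c"]) (auto simp: mult.assoc)
    next
      assume "\<exists>d. d \<noteq> 0 \<and> v = (\<lambda>i. d * u i)"
      then obtain d where "d \<noteq> 0" "v = (\<lambda>i. d * u i)" by blast
      thus "\<exists>d. d \<noteq> 0 \<and> v = (\<lambda>i. d * (c * u i))" using c
        by (intro exI[of _ "d/c"]) auto
    qed
  qed
qed

lemma pclass_mem_eq: "v \<in> pclass u \<Longrightarrow> pclass v = pclass u"
  using pclass_scale unfolding pclass_mem_iff by blast

lemma Proj_iff: "p \<in> Proj I \<longleftrightarrow> (\<exists>u. u \<in> vecs I \<and> u \<noteq> (\<lambda>_. 0) \<and> p = pclass u)"
  unfolding Proj_def by blast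

lemma Proj_nonempty: "p \<in> Proj I \<Longrightarrow> p \<noteq> {}"
  using pclass_self unfolding Proj_iff by blast

section \<open>Polynomial functions\<close>

lemma polyfun_smult: "f \<in> polyfun I \<Longrightarrow> (\<lambda>v. c * f v) \<in> polyfun I"
  by (rule polyfun.mult[OF polyfun.const])

lemma polyfun_sub: "f \<in> polyfun I \<Longrightarrow> g \<in> polyfun I \<Longrightarrow> (\<lambda>v. f v - g v) \<in> polyfun I"
proof -
  assume f: "f \<in> polyfun I" and g: "g \<in> polyfun I"
  have "(\<lambda>v. f v + (-1) * g v) \<in> polyfun I"
    by (rule polyfun.add[OF f polyfun_smult[OF g]])
  thus ?thesis by simp
qed

lemma polyfun_sum: "(\<And>i. i < (n::nat) \<Longrightarrow> f i \<in> polyfun I) \<Longrightarrow> (\<lambda>v. \<Sum>i<n. f i v) \<in> polyfun I"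
proof (induction n)
  case 0 then show ?case using polyfun.const[of 0 I] by simp
next
  case (Suc n)
  have "(\<lambda>v. (\<Sum>i<n. f i v) + f n v) \<in> polyfun I"
    by (rule polyfun.add) (use Suc in auto)
  thus ?case by simp
qed

lemma polyfun_pow: "f \<in> polyfun I \<Longrightarrow> (\<lambda>v. f v ^ n) \<in> polyfun I"
proof (induction n)
  case 0 then show ?case using polyfun.const[of 1 I] by simp
next
  case (Suc n)
  have "(\<lambda>v. f v * f v ^ n) \<in> polyfun I"
    by (rule polyfun.mult) (use Suc in auto)
  thus ?case by simp
qed

lemma homog_var: "k \<in> I \<Longrightarrow> homog I 1 (\<lambda>v. v k)"
  unfolding homog_def by (auto intro: polyfun.var)

lemma homog_zero: "homog I d (\<lambda>v. 0)"
  unfolding homog_def by (auto intro: polyfun.const)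

lemma homog_const1: "homog I 0 (\<lambda>v. 1)"
  unfolding homog_def by (auto intro: polyfun.const)

lemma homog_mult: "homog I d f \<Longrightarrow> homog I e g \<Longrightarrow> homog I (d+e) (\<lambda>v. f v * g v)"
  unfolding homog_def by (auto intro: polyfun.mult simp: power_add)

lemma homog_add: "homog I d f \<Longrightarrow> homog I d g \<Longrightarrow> homog I d (\<lambda>v. f v + g v)"
  unfolding homog_def by (auto intro: polyfun.add simp: distrib_left)

lemma homog_sub: "homog I d f \<Longrightarrow> homog I d g \<Longrightarrow> homog I d (\<lambda>v. f v - g v)"
  unfolding homog_def by (auto intro: polyfun_sub simp: right_diff_distrib)

lemma homog_smult: "homog I d f \<Longrightarrow> homog I d (\<lambda>v. c * f v)"
  unfolding homog_def by (auto intro: polyfun_smult)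

lemma homog_sum: "(\<And>i. i < (n::nat) \<Longrightarrow> homog I d (f i)) \<Longrightarrow> homog I d (\<lambda>v. \<Sum>i<n. f i v)"
  unfolding homog_def by (auto intro!: polyfun_sum simp: sum_distrib_left)

lemma homog_pow: "k \<in> I \<Longrightarrow> homog I n (\<lambda>v. v k ^ n)"
  unfolding homog_def by (auto intro!: polyfun_pow polyfun.var simp: power_mult_distrib)

lemma homog_scale: "homog I d f \<Longrightarrow> f (\<lambda>i. c * v i) = c ^ d * f v"
  unfolding homog_def by blast

lemma vanish_pclass: "homog I d f \<Longrightarrow> vanish f (pclass u) \<longleftrightarrow> f u = 0"
proof -
  assume h: "homog I d f"
  show ?thesis
    unfolding vanish_def
  proof
    assume "\<forall>v\<in>pclass u. f v = 0" thus "f u = 0" using pclass_self by blast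
  next
    assume "f u = 0"
    thus "\<forall>v\<in>pclass u. f v = 0" using homog_scale[OF h] by (auto simp: pclass_mem_iff)
  qed
qed

lemma homog_deg0_const: "homog I 0 f \<Longrightarrow> f v = f (\<lambda>_. 0)"
  using homog_scale[of I 0 f 0 v] by simp

lemma closed_empty: "zariski_closed I {}"
  unfolding zariski_closed_def
  apply (rule exI[of _ "{\<lambda>v. 1}"])
  using homog_const1 Proj_nonempty by (auto simp: vanish_def)

lemma closed_single: "homog I d h \<Longrightarrow> zariski_closed I {p \<in> Proj I. vanish h p}"
  unfolding zariski_closed_def
  by (rule exI[of _ "{h}"]) auto

lemma closed_subset_Proj: "zariski_closed I X \<Longrightarrow> X \<subseteq> Proj I"
  unfolding zariski_closed_def by auto

definition rho :: "bool \<Rightarrow> nat \<times> nat \<Rightarrow> nat \<times> nat" where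
  "rho b k = (if b then prod.swap k else k)"

definition Sv :: "bool \<Rightarrow> (nat \<Rightarrow> complex) \<Rightarrow> (nat \<Rightarrow> complex) \<Rightarrow> nat \<times> nat \<Rightarrow> complex" where
  "Sv b x y k = (if rho b k \<in> Sidx then x (fst (rho b k)) * y (snd (rho b k)) else 0)"

lemma rho_rho[simp]: "rho b (rho b k) = k"
  by (cases k) (auto simp: rho_def)

lemma rho_inj[simp]: "rho b k = rho b k' \<longleftrightarrow> k = k'"
  by (metis rho_rho)

lemma Sidx_iff: "(i,j) \<in> Sidx \<longleftrightarrow> i \<le> 2 \<and> j \<le> 1"
  by (auto simp: Sidx_def)

lemma P7idx_iff: "(i,j) \<in> P7idx \<longleftrightarrow> i \<le> 2 \<and> j \<le> 2 \<and> (i,j) \<noteq> (2,2)"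
  by (auto simp: P7idx_def)

lemma Sidx_P7: "k \<in> Sidx \<Longrightarrow> k \<in> P7idx"
  by (cases k) (auto simp: Sidx_iff P7idx_iff)

lemma rho_P7: "k \<in> P7idx \<Longrightarrow> rho b k \<in> P7idx"
  by (cases k) (auto simp: rho_def P7idx_iff)

lemma rho_P7_iff: "rho b k \<in> P7idx \<longleftrightarrow> k \<in> P7idx"
  by (metis rho_P7 rho_rho)

lemma rho_Sidx_P7: "(i,j) \<in> Sidx \<Longrightarrow> rho b (i,j) \<in> P7idx"
  using Sidx_P7 rho_P7 by blast

lemma finite_P7: "finite P7idx"
proof -
  have "P7idx \<subseteq> {..2} \<times> {..2}" by (auto simp: P7idx_def)
  thus ?thesis by (rule finite_subset) auto
qed

lemma P7idx_eq: "P7idx = ({..2} \<times> {..2}) - {(2,2)}"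
  by (auto simp: P7idx_def)

lemma card_P7: "card P7idx = 8"
  unfolding P7idx_eq by (simp add: card_Diff_singleton)

lemma Sv_rho: "(i,j) \<in> Sidx \<Longrightarrow> Sv b x y (rho b (i,j)) = x i * y j"
  by (simp add: Sv_def)

lemma Sv_scale_x: "Sv b (\<lambda>i. c * x i) y = (\<lambda>k. c * Sv b x y k)"
  by (auto simp: Sv_def fun_eq_iff)

lemma Sv_scale_y: "Sv b x (\<lambda>i. c * y i) = (\<lambda>k. c * Sv b x y k)"
  by (auto simp: Sv_def fun_eq_iff)

lemma Sv_vecs: "Sv b x y \<in> vecs P7idx"
  unfolding vecs_def mem_Collect_eq
proof (intro allI impI)
  fix k assume "k \<notin> P7idx"
  hence "rho b k \<notin> Sidx" using Sidx_P7 rho_P7_iff by blast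
  thus "Sv b x y k = 0" unfolding Sv_def by simp
qed

lemma Sv_nonzero: "i \<le> 2 \<Longrightarrow> j \<le> 1 \<Longrightarrow> x i \<noteq> 0 \<Longrightarrow> y j \<noteq> 0 \<Longrightarrow> Sv b x y \<noteq> (\<lambda>_. 0)"
proof
  assume "i \<le> 2" "j \<le> 1" "x i \<noteq> 0" "y j \<noteq> 0" "Sv b x y = (\<lambda>_. 0)"
  hence "Sv b x y (rho b (i,j)) = 0" by simp
  thus False using Sv_rho[of i j b x y] \<open>i \<le> 2\<close> \<open>j \<le> 1\<close> \<open>x i \<noteq> 0\<close> \<open>y j \<noteq> 0\<close>
    by (simp add: Sidx_iff)
qed

definition Dsub :: "bool \<Rightarrow> nat set \<Rightarrow> nat set \<Rightarrow> (nat \<times> nat \<Rightarrow> complex) set set" where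
  "Dsub b A B = {pclass (Sv b x y) | x y. (\<forall>i. i \<notin> A \<longrightarrow> x i = 0) \<and> (\<forall>j. j \<notin> B \<longrightarrow> y j = 0) \<and>
       (\<exists>i\<in>A. x i \<noteq> 0) \<and> (\<exists>j\<in>B. y j \<noteq> 0)}"

lemma Dsub_mem: "p \<in> Dsub b A B \<longleftrightarrow> (\<exists>x y. p = pclass (Sv b x y) \<and> (\<forall>i. i \<notin> A \<longrightarrow> x i = 0) \<and> (\<forall>j. j \<notin> B \<longrightarrow> y j = 0) \<and>
       (\<exists>i\<in>A. x i \<noteq> 0) \<and> (\<exists>j\<in>B. y j \<noteq> 0))"
  unfolding Dsub_def by blast

definition Fcoord :: "bool \<Rightarrow> nat set \<Rightarrow> nat set \<Rightarrow> ((nat \<times> nat \<Rightarrow> complex) \<Rightarrow> complex) set" where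
  "Fcoord b A B = (\<lambda>k. \<lambda>v. v k) ` {k \<in> P7idx. rho b k \<notin> A \<times> B}"

definition minor :: "bool \<Rightarrow> nat \<Rightarrow> nat \<Rightarrow> nat \<Rightarrow> nat \<Rightarrow> (nat \<times> nat \<Rightarrow> complex) \<Rightarrow> complex" where
  "minor b i i' j j' v = v (rho b (i,j)) * v (rho b (i',j')) - v (rho b (i,j')) * v (rho b (i',j))"

definition Fminor :: "bool \<Rightarrow> ((nat \<times> nat \<Rightarrow> complex) \<Rightarrow> complex) set" where
  "Fminor b = (\<lambda>(i,i',j,j'). minor b i i' j j') ` ({..2} \<times> {..2} \<times> {..1} \<times> {..1})"

lemma homog_minor: "i \<le> 2 \<Longrightarrow> i' \<le> 2 \<Longrightarrow> j \<le> 1 \<Longrightarrow> j' \<le> 1 \<Longrightarrow> homog P7idx 2 (minor b i i' j j')"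
proof -
  assume "i \<le> 2" "i' \<le> 2" "j \<le> 1" "j' \<le> 1"
  hence m: "rho b (i,j) \<in> P7idx" "rho b (i',j') \<in> P7idx" "rho b (i,j') \<in> P7idx" "rho b (i',j) \<in> P7idx"
    by (auto intro!: rho_Sidx_P7 simp: Sidx_iff)
  have "homog P7idx (1+1) (\<lambda>v. v (rho b (i,j)) * v (rho b (i',j')) - v (rho b (i,j')) * v (rho b (i',j)))"
    by (intro homog_sub homog_mult homog_var m)
  thus ?thesis unfolding minor_def by (simp add: numeral_2_eq_2)
qed

lemma good_Sidx: "A \<subseteq> {..2} \<Longrightarrow> B \<subseteq> {..1} \<Longrightarrow> A \<times> B \<subseteq> Sidx"
  by (auto simp: Sidx_iff)

lemma Dsub_closed_eq:
  assumes A: "A \<subseteq> {..2}" and B: "B \<subseteq> {..1}"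
  shows "Dsub b A B = {p \<in> Proj P7idx. \<forall>f\<in>Fcoord b A B \<union> Fminor b. vanish f p}"
proof (rule set_eqI; rule iffI)
  fix p assume "p \<in> Dsub b A B"
  then obtain x y where p: "p = pclass (Sv b x y)" and xA: "\<forall>i. i \<notin> A \<longrightarrow> x i = 0"
    and yB: "\<forall>j. j \<notin> B \<longrightarrow> y j = 0" and i0: "\<exists>i\<in>A. x i \<noteq> 0" and j0: "\<exists>j\<in>B. y j \<noteq> 0"
    unfolding Dsub_mem by blast
  have "Sv b x y \<noteq> (\<lambda>_. 0)"
  proof -
    obtain i j where "i \<in> A" "j \<in> B" "x i \<noteq> 0" "y j \<noteq> 0" using i0 j0 by blast
    thus ?thesis using A B by (intro Sv_nonzero[of i j]) auto
  qed
  hence P: "p \<in> Proj P7idx" unfolding Proj_iff p using Sv_vecs by blast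
  have "vanish f p" if f: "f \<in> Fcoord b A B \<union> Fminor b" for f
  proof (cases "f \<in> Fcoord b A B")
    case True
    then obtain k where k: "k \<in> P7idx" "rho b k \<notin> A \<times> B" and fk: "f = (\<lambda>v. v k)"
      unfolding Fcoord_def by blast
    have "Sv b x y k = 0"
      using k xA yB unfolding Sv_def by (cases "rho b k") auto
    thus ?thesis unfolding p fk using vanish_pclass[OF homog_var[OF k(1)]] by simp
  next
    case False
    then obtain i i' j j' where ij: "i \<le> 2" "i' \<le> 2" "j \<le> 1" "j' \<le> 1" and fm: "f = minor b i i' j j'"
      using f unfolding Fminor_def by auto
    have "minor b i i' j j' (Sv b x y) = 0"
      unfolding minor_def using ij by (simp add: Sv_rho Sidx_iff)
    thus ?thesis unfolding p fm using vanish_pclass[OF homog_minor[OF ij]] by simp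
  qed
  thus "p \<in> {p \<in> Proj P7idx. \<forall>f\<in>Fcoord b A B \<union> Fminor b. vanish f p}" using P by blast
next
  fix p assume "p \<in> {p \<in> Proj P7idx. \<forall>f\<in>Fcoord b A B \<union> Fminor b. vanish f p}"
  then obtain u where u: "u \<in> vecs P7idx" "u \<noteq> (\<lambda>_. 0)" and p: "p = pclass u"
    and van: "\<forall>f\<in>Fcoord b A B \<union> Fminor b. vanish f p" unfolding Proj_iff by blast
  have ucoord: "u k = 0" if "k \<in> P7idx" "rho b k \<notin> A \<times> B" for k
  proof -
    have "(\<lambda>v. v k) \<in> Fcoord b A B" unfolding Fcoord_def using that by blast
    hence "vanish (\<lambda>v. v k) p" using van by blast
    thus ?thesis unfolding p using vanish_pclass[OF homog_var[OF that(1)]] by simp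
  qed
  have uminor: "minor b i i' j j' u = 0" if "i \<le> 2" "i' \<le> 2" "j \<le> 1" "j' \<le> 1" for i i' j j'
  proof -
    have "(i,i',j,j') \<in> {..2} \<times> {..2} \<times> {..1} \<times> {..1}" using that by simp
    hence "minor b i i' j j' \<in> Fminor b" unfolding Fminor_def by (rule rev_image_eqI) simp
    hence "vanish (minor b i i' j j') p" using van by blast
    thus ?thesis unfolding p using vanish_pclass[OF homog_minor[OF that]] by simp
  qed
  have uout: "u k = 0" if "rho b k \<notin> A \<times> B" for k
    using ucoord[OF _ that] u(1) unfolding vecs_def by blast
  obtain k0 where "u k0 \<noteq> 0" using u(2) by (metis (mono_tags) ext)
  then obtain i0 j0 where ij0: "rho b k0 = (i0,j0)" "(i0,j0) \<in> A \<times> B" using uout by fastforce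
  hence k0: "k0 = rho b (i0,j0)" by (metis rho_rho)
  have u0: "u (rho b (i0,j0)) \<noteq> 0" using \<open>u k0 \<noteq> 0\<close> k0 by simp
  have i0: "i0 \<le> 2" and j0: "j0 \<le> 1" using ij0 A B by auto
  define x where "x i = (if i \<le> 2 then u (rho b (i,j0)) else 0)" for i
  define y where "y j = (if j \<le> 1 then u (rho b (i0,j)) / u (rho b (i0,j0)) else 0)" for j
  have Sveq: "Sv b x y = u"
  proof
    fix k
    show "Sv b x y k = u k"
    proof (cases "rho b k \<in> Sidx")
      case True
      then obtain i j where ij: "rho b k = (i,j)" "i \<le> 2" "j \<le> 1" by (cases "rho b k") (auto simp: Sidx_iff)
      hence kk: "k = rho b (i,j)" by (metis rho_rho)
      have "minor b i i0 j j0 u = 0" using uminor ij i0 j0 by blast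
      hence eq: "u (rho b (i,j)) * u (rho b (i0,j0)) = u (rho b (i,j0)) * u (rho b (i0,j))"
        unfolding minor_def by simp
      have "(i,j) \<in> Sidx" using ij by (simp add: Sidx_iff)
      hence "Sv b x y k = x i * y j" unfolding kk by (rule Sv_rho)
      also have "\<dots> = u (rho b (i,j0)) * (u (rho b (i0,j)) / u (rho b (i0,j0)))"
        using ij unfolding x_def y_def by simp
      also have "\<dots> = u k" unfolding kk using u0 eq by (simp add: field_simps)
      finally show ?thesis .
    next
      case False
      have "rho b k \<notin> A \<times> B" using False good_Sidx[OF A B] by (meson subsetD)
      hence "u k = 0" by (rule uout)
      moreover have "Sv b x y k = 0" unfolding Sv_def using False by simp
      ultimately show ?thesis by simp
    qed
  qed
  have xA: "\<forall>i. i \<notin> A \<longrightarrow> x i = 0"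
  proof (intro allI impI)
    fix i assume "i \<notin> A"
    hence "rho b (rho b (i,j0)) \<notin> A \<times> B" by simp
    hence "u (rho b (i,j0)) = 0" by (rule uout)
    thus "x i = 0" unfolding x_def by simp
  qed
  have yB: "\<forall>j. j \<notin> B \<longrightarrow> y j = 0"
  proof (intro allI impI)
    fix j assume "j \<notin> B"
    hence "rho b (rho b (i0,j)) \<notin> A \<times> B" by simp
    hence "u (rho b (i0,j)) = 0" by (rule uout)
    thus "y j = 0" unfolding y_def by simp
  qed
  have "x i0 \<noteq> 0" using u0 i0 unfolding x_def by simp
  moreover have "y j0 \<noteq> 0" using u0 j0 unfolding y_def by simp
  moreover have "i0 \<in> A" "j0 \<in> B" using ij0 by auto
  ultimately have "\<exists>i\<in>A. x i \<noteq> 0" "\<exists>j\<in>B. y j \<noteq> 0" by blast+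
  hence "pclass u = pclass (Sv b x y) \<and> (\<forall>i. i \<notin> A \<longrightarrow> x i = 0) \<and> (\<forall>j. j \<notin> B \<longrightarrow> y j = 0) \<and>
       (\<exists>i\<in>A. x i \<noteq> 0) \<and> (\<exists>j\<in>B. y j \<noteq> 0)" using xA yB Sveq by simp
  thus "p \<in> Dsub b A B" unfolding Dsub_mem p by blast
qed

lemma finite_Fcoord: "finite (Fcoord b A B)"
  unfolding Fcoord_def using finite_P7 by auto

lemma finite_Fminor: "finite (Fminor b)"
  unfolding Fminor_def by (intro finite_imageI finite_cartesian_product) auto

lemma Dsub_closed:
  assumes A: "A \<subseteq> {..2}" and B: "B \<subseteq> {..1}"
  shows "zariski_closed P7idx (Dsub b A B)"
  unfolding zariski_closed_def
proof (rule exI[of _ "Fcoord b A B \<union> Fminor b"], intro conjI)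
  show "finite (Fcoord b A B \<union> Fminor b)" using finite_Fcoord finite_Fminor by blast
  show "\<forall>f\<in>Fcoord b A B \<union> Fminor b. \<exists>d. homog P7idx d f"
  proof
    fix f assume "f \<in> Fcoord b A B \<union> Fminor b"
    thus "\<exists>d. homog P7idx d f"
    proof
      assume "f \<in> Fcoord b A B"
      then obtain k where fk: "f = (\<lambda>v. v k)" and "k \<in> {k \<in> P7idx. rho b k \<notin> A \<times> B}"
        unfolding Fcoord_def by (rule imageE)
      hence "k \<in> P7idx" by simp
      hence "homog P7idx 1 f" unfolding fk by (rule homog_var)
      thus ?thesis by blast
    next
      assume "f \<in> Fminor b"
      then obtain i i' j j' where c: "i \<le> 2" "i' \<le> 2" "j \<le> 1" "j' \<le> 1" and fm: "f = minor b i i' j j'"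
        unfolding Fminor_def by auto
      have "homog P7idx 2 f" unfolding fm using c by (rule homog_minor)
      thus ?thesis by blast
    qed
  qed
  show "Dsub b A B = {p \<in> Proj P7idx. \<forall>f\<in>Fcoord b A B \<union> Fminor b. vanish f p}"
    by (rule Dsub_closed_eq[OF A B])
qed

lemma polyfun_curve:
  assumes "f \<in> polyfun I" and c: "\<forall>k. \<exists>P. \<forall>t. \<gamma> t k = poly P t"
  shows "\<exists>P. \<forall>t. f (\<gamma> t) = poly P t"
  using assms(1)
proof induct
  case (const c) show ?case by (rule exI[of _ "[:c:]"]) simp
next
  case (var i) show ?case using c by blast
next
  case (add f g)
  then obtain P Q where "\<forall>t. f (\<gamma> t) = poly P t" "\<forall>t. g (\<gamma> t) = poly Q t" by blast
  thus ?case by (intro exI[of _ "P + Q"]) simp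
next
  case (mult f g)
  then obtain P Q where "\<forall>t. f (\<gamma> t) = poly P t" "\<forall>t. g (\<gamma> t) = poly Q t" by blast
  thus ?case by (intro exI[of _ "P * Q"]) simp
qed

lemma Dsub_vec:
  assumes "p \<in> Dsub b A B" "v \<in> p"
  shows "\<exists>x y. v = Sv b x y \<and> (\<forall>i. i \<notin> A \<longrightarrow> x i = 0) \<and> (\<forall>j. j \<notin> B \<longrightarrow> y j = 0) \<and>
       (\<exists>i\<in>A. x i \<noteq> 0) \<and> (\<exists>j\<in>B. y j \<noteq> 0)"
proof -
  obtain x y where p: "p = pclass (Sv b x y)" and xA: "\<forall>i. i \<notin> A \<longrightarrow> x i = 0"
    and yB: "\<forall>j. j \<notin> B \<longrightarrow> y j = 0" and i0: "\<exists>i\<in>A. x i \<noteq> 0" and j0: "\<exists>j\<in>B. y j \<noteq> 0"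
    using assms(1) unfolding Dsub_mem by blast
  obtain c where c: "c \<noteq> 0" "v = (\<lambda>k. c * Sv b x y k)" using assms(2) unfolding p pclass_mem_iff by blast
  have "v = Sv b (\<lambda>i. c * x i) y" using c by (simp add: Sv_scale_x)
  moreover have "\<forall>i. i \<notin> A \<longrightarrow> c * x i = 0" using xA by simp
  moreover have "\<exists>i\<in>A. c * x i \<noteq> 0" using i0 c by simp
  ultimately show ?thesis using yB j0 by blast
qed

lemma Dsub_Proj: "A \<subseteq> {..2} \<Longrightarrow> B \<subseteq> {..1} \<Longrightarrow> Dsub b A B \<subseteq> Proj P7idx"
  using Dsub_closed closed_subset_Proj by blast

lemma subsingleton_finite: "(\<And>s t. P s \<Longrightarrow> P t \<Longrightarrow> s = t) \<Longrightarrow> finite {t. P t}"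
proof (cases "\<exists>t. P t")
  case True
  then obtain t0 where "P t0" by blast
  assume h: "\<And>s t. P s \<Longrightarrow> P t \<Longrightarrow> s = t"
  have "{t. P t} \<subseteq> {t0}" using h \<open>P t0\<close> by blast
  thus ?thesis by (rule finite_subset) simp
qed simp

lemma line_zero_unique:
  fixes x1 x2 :: "nat \<Rightarrow> complex"
  assumes "i \<in> A" "x1 i \<noteq> 0"
  shows "finite {t. \<forall>i\<in>A. x1 i + t * (x2 i - x1 i) = 0}"
proof (rule subsingleton_finite)
  fix s t
  assume s: "\<forall>i\<in>A. x1 i + s * (x2 i - x1 i) = 0" and t: "\<forall>i\<in>A. x1 i + t * (x2 i - x1 i) = 0"
  have es: "x1 i + s * (x2 i - x1 i) = 0" and et: "x1 i + t * (x2 i - x1 i) = 0" using s t assms(1) by auto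
  have d: "x2 i - x1 i \<noteq> 0"
  proof
    assume "x2 i - x1 i = 0" thus False using es assms(2) by simp
  qed
  have "s * (x2 i - x1 i) = - x1 i" using es by (metis add_eq_0_iff)
  moreover have "t * (x2 i - x1 i) = - x1 i" using et by (metis add_eq_0_iff)
  ultimately have "s * (x2 i - x1 i) = t * (x2 i - x1 i)" by simp
  thus "s = t" using d by simp
qed

lemma closed_vanishing_witness:
  assumes "zariski_closed I S" "p \<in> Proj I" "p \<notin> S"
  obtains f d where "homog I d f" "\<forall>q\<in>S. vanish f q" "\<not> vanish f p"
proof -
  obtain F where F: "finite F" "\<forall>f\<in>F. \<exists>d. homog I d f" "S = {p \<in> Proj I. \<forall>f\<in>F. vanish f p}"
    using assms(1) unfolding zariski_closed_def by blast
  then obtain f where "f \<in> F" "\<not> vanish f p" using assms(2,3) by blast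
  moreover obtain d where "homog I d f" using F(2) \<open>f \<in> F\<close> by blast
  moreover have "\<forall>q\<in>S. vanish f q" using F(3) \<open>f \<in> F\<close> by blast
  ultimately show ?thesis using that by blast
qed

lemma Dsub_nonempty:
  assumes "i \<in> A" "j \<in> B"
  shows "pclass (Sv b (\<lambda>k. if k = i then 1 else 0) (\<lambda>k. if k = j then 1 else 0)) \<in> Dsub b A B"
  unfolding Dsub_mem
  apply (rule exI[of _ "\<lambda>k. if k = i then 1 else 0"])
  apply (rule exI[of _ "\<lambda>k. if k = j then 1 else 0"])
  using assms by auto

lemma Dsub_irreducible:
  assumes A: "A \<subseteq> {..2}" "A \<noteq> {}" and B: "B \<subseteq> {..1}" "B \<noteq> {}"
  shows "zar_irreducible P7idx (Dsub b A B)"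
  unfolding zar_irreducible_def
proof (intro conjI allI impI)
  obtain i j where "i \<in> A" "j \<in> B" using A B by blast
  thus "Dsub b A B \<noteq> {}" using Dsub_nonempty by blast
next
  fix S T
  assume h: "zariski_closed P7idx S \<and> zariski_closed P7idx T \<and> Dsub b A B \<subseteq> S \<union> T"
  show "Dsub b A B \<subseteq> S \<or> Dsub b A B \<subseteq> T"
  proof (rule ccontr)
    assume "\<not> (Dsub b A B \<subseteq> S \<or> Dsub b A B \<subseteq> T)"
    then obtain p1 p2 where p1: "p1 \<in> Dsub b A B" "p1 \<notin> S" and p2: "p2 \<in> Dsub b A B" "p2 \<notin> T" by blast
    have P: "Dsub b A B \<subseteq> Proj P7idx" using Dsub_Proj A B by blast
    have cS: "zariski_closed P7idx S" and cT: "zariski_closed P7idx T" using h by blast+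
    have p1P: "p1 \<in> Proj P7idx" and p2P: "p2 \<in> Proj P7idx" using P p1 p2 by blast+
    obtain f d where f: "homog P7idx d f" "\<forall>q\<in>S. vanish f q" "\<not> vanish f p1"
      by (rule closed_vanishing_witness[OF cS p1P p1(2)])
    obtain g e where g: "homog P7idx e g" "\<forall>q\<in>T. vanish g q" "\<not> vanish g p2"
      by (rule closed_vanishing_witness[OF cT p2P p2(2)])
    obtain v1 where v1: "v1 \<in> p1" "f v1 \<noteq> 0" using f(3) unfolding vanish_def by blast
    obtain v2 where v2: "v2 \<in> p2" "g v2 \<noteq> 0" using g(3) unfolding vanish_def by blast
    obtain x1 y1 where xy1: "v1 = Sv b x1 y1" "\<forall>i. i \<notin> A \<longrightarrow> x1 i = 0" "\<forall>j. j \<notin> B \<longrightarrow> y1 j = 0"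
       "\<exists>i\<in>A. x1 i \<noteq> 0" "\<exists>j\<in>B. y1 j \<noteq> 0"
      using Dsub_vec[OF p1(1) v1(1)] by blast
    obtain x2 y2 where xy2: "v2 = Sv b x2 y2" "\<forall>i. i \<notin> A \<longrightarrow> x2 i = 0" "\<forall>j. j \<notin> B \<longrightarrow> y2 j = 0"
       "\<exists>i\<in>A. x2 i \<noteq> 0" "\<exists>j\<in>B. y2 j \<noteq> 0"
      using Dsub_vec[OF p2(1) v2(1)] by blast
    define xt where "xt t = (\<lambda>i. x1 i + t * (x2 i - x1 i))" for t :: complex
    define yt where "yt t = (\<lambda>j. y1 j + t * (y2 j - y1 j))" for t :: complex
    define \<gamma> where "\<gamma> t = Sv b (xt t) (yt t)" for t
    have curve: "\<forall>k. \<exists>P. \<forall>t. \<gamma> t k = poly P t"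
    proof
      fix k
      show "\<exists>P. \<forall>t. \<gamma> t k = poly P t"
      proof (cases "rho b k \<in> Sidx")
        case True
        obtain i j where ij: "rho b k = (i,j)" by (cases "rho b k")
        show ?thesis
          apply (rule exI[of _ "[:x1 i, x2 i - x1 i:] * [:y1 j, y2 j - y1 j:]"])
          using True ij unfolding \<gamma>_def Sv_def xt_def yt_def by (simp add: algebra_simps)
      next
        case False
        show ?thesis
          apply (rule exI[of _ 0])
          using False unfolding \<gamma>_def Sv_def by simp
      qed
    qed
    have fp: "f \<in> polyfun P7idx" "g \<in> polyfun P7idx" using f(1) g(1) unfolding homog_def by blast+
    obtain PF where PF: "\<forall>t. f (\<gamma> t) = poly PF t" using polyfun_curve[OF fp(1) curve] by blast
    obtain PG where PG: "\<forall>t. g (\<gamma> t) = poly PG t" using polyfun_curve[OF fp(2) curve] by blast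
    have "\<gamma> 0 = v1" unfolding \<gamma>_def xt_def yt_def xy1(1) by simp
    hence "poly PF 0 \<noteq> 0" using PF v1 by metis
    hence PF0: "PF \<noteq> 0" by auto
    have "\<gamma> 1 = v2" unfolding \<gamma>_def xt_def yt_def xy2(1) by simp
    hence "poly PG 1 \<noteq> 0" using PG v2 by metis
    hence PG0: "PG \<noteq> 0" by auto
    have PP0: "PF * PG \<noteq> 0" using PF0 PG0 by simp
    define bad where "bad = {t. \<forall>i\<in>A. xt t i = 0} \<union> {t. \<forall>j\<in>B. yt t j = 0}"
    have finbad: "finite bad"
    proof -
      obtain i where "i \<in> A" "x1 i \<noteq> 0" using xy1 by blast
      hence "finite {t. \<forall>i\<in>A. xt t i = 0}" unfolding xt_def by (rule line_zero_unique)
      moreover obtain j where "j \<in> B" "y1 j \<noteq> 0" using xy1 by blast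
      hence "finite {t. \<forall>j\<in>B. yt t j = 0}" unfolding yt_def by (rule line_zero_unique)
      ultimately show ?thesis unfolding bad_def by blast
    qed
    have roots: "UNIV - bad \<subseteq> {t. poly (PF * PG) t = 0}"
    proof
      fix t assume "t \<in> UNIV - bad"
      hence nb: "\<exists>i\<in>A. xt t i \<noteq> 0" "\<exists>j\<in>B. yt t j \<noteq> 0" unfolding bad_def by auto
      have "\<forall>i. i \<notin> A \<longrightarrow> xt t i = 0" using xy1(2) xy2(2) unfolding xt_def by simp
      moreover have "\<forall>j. j \<notin> B \<longrightarrow> yt t j = 0" using xy1(3) xy2(3) unfolding yt_def by simp
      ultimately have "pclass (\<gamma> t) \<in> Dsub b A B" unfolding Dsub_mem \<gamma>_def using nb by blast
      hence "pclass (\<gamma> t) \<in> S \<or> pclass (\<gamma> t) \<in> T" using h by blast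
      hence "f (\<gamma> t) = 0 \<or> g (\<gamma> t) = 0"
        using f(2) g(2) pclass_self unfolding vanish_def by blast
      thus "t \<in> {t. poly (PF * PG) t = 0}" using PF PG by auto
    qed
    have "finite {t. poly (PF * PG) t = 0}" using poly_roots_finite[OF PP0] .
    hence "finite (UNIV - bad)" using roots finite_subset by blast
    hence "finite (UNIV :: complex set)" using finbad by (metis Diff_infinite_finite)
    thus False by (simp add: infinite_UNIV_char_0)
  qed
qed

section \<open>Linear algebra: more unknowns than equations\<close>

lemma gauss:
  fixes k :: "'i \<Rightarrow> 'm \<Rightarrow> complex"
  assumes "finite M" "finite I" "card M < card I"
  shows "\<exists>a. (\<exists>i\<in>I. a i \<noteq> 0) \<and> (\<forall>m\<in>M. (\<Sum>i\<in>I. a i * k i m) = 0)"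
  using assms
proof (induction M arbitrary: I k rule: finite_induct)
  case empty
  then obtain i where "i \<in> I" by fastforce
  thus ?case by (intro exI[of _ "\<lambda>_. 1"]) auto
next
  case (insert m0 M)
  have cardI: "Suc (card M) < card I" using insert by simp
  show ?case
  proof (cases "\<forall>i\<in>I. k i m0 = 0")
    case True
    have "card M < card I" using cardI by simp
    then obtain a where a: "\<exists>i\<in>I. a i \<noteq> 0" "\<forall>m\<in>M. (\<Sum>i\<in>I. a i * k i m) = 0"
      using insert.IH[OF insert.prems(1)] by blast
    have "(\<Sum>i\<in>I. a i * k i m0) = 0" using True by simp
    thus ?thesis using a by auto
  next
    case False
    then obtain i0 where i0: "i0 \<in> I" "k i0 m0 \<noteq> 0" by blast
    define I' where "I' = I - {i0}"
    have finI': "finite I'" using insert.prems(1) unfolding I'_def by simp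
    have cI': "card M < card I'" using cardI i0(1) insert.prems(1) unfolding I'_def by simp
    define k' where "k' i m = k i m - (k i m0 / k i0 m0) * k i0 m" for i m
    obtain a' where a': "\<exists>i\<in>I'. a' i \<noteq> 0" "\<forall>m\<in>M. (\<Sum>i\<in>I'. a' i * k' i m) = 0"
      using insert.IH[OF finI' cI', of k'] by blast
    define s where "s = (\<Sum>j\<in>I'. a' j * k j m0)"
    define a where "a i = (if i = i0 then - s / k i0 m0 else a' i)" for i
    have split: "(\<Sum>i\<in>I. a i * k i m) = a i0 * k i0 m + (\<Sum>i\<in>I'. a' i * k i m)" for m
    proof -
      have "(\<Sum>i\<in>I. a i * k i m) = a i0 * k i0 m + (\<Sum>i\<in>I'. a i * k i m)"
        unfolding I'_def using insert.prems(1) i0(1) by (simp add: sum.remove)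
      moreover have "(\<Sum>i\<in>I'. a i * k i m) = (\<Sum>i\<in>I'. a' i * k i m)"
        unfolding a_def I'_def by (intro sum.cong) auto
      ultimately show ?thesis by simp
    qed
    have "\<exists>i\<in>I. a i \<noteq> 0" using a' unfolding a_def I'_def by auto
    moreover have "(\<Sum>i\<in>I. a i * k i m) = 0" if m: "m \<in> insert m0 M" for m
    proof (cases "m = m0")
      case True
      have "(\<Sum>i\<in>I. a i * k i m) = a i0 * k i0 m0 + (\<Sum>i\<in>I'. a' i * k i m0)"
        unfolding True by (rule split)
      also have "\<dots> = 0" unfolding a_def s_def using i0(2) by simp
      finally show ?thesis .
    next
      case False
      hence mM: "m \<in> M" using m by simp
      have "(\<Sum>i\<in>I'. a' i * k i m) = (\<Sum>i\<in>I'. a' i * k' i m + a' i * k i m0 * (k i0 m / k i0 m0))"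
        unfolding k'_def by (intro sum.cong) (auto simp: algebra_simps)
      also have "\<dots> = (\<Sum>i\<in>I'. a' i * k' i m) + s * (k i0 m / k i0 m0)"
        unfolding s_def by (simp add: sum.distrib sum_distrib_right mult.assoc sum_divide_distrib)
      also have "\<dots> = s * (k i0 m / k i0 m0)" using a'(2) mM by simp
      finally have "(\<Sum>i\<in>I'. a' i * k i m) = s * (k i0 m / k i0 m0)" .
      moreover have "(\<Sum>i\<in>I. a i * k i m) = a i0 * k i0 m + (\<Sum>i\<in>I'. a' i * k i m)"
        by (rule split)
      ultimately show ?thesis unfolding a_def using i0(2) by simp
    qed
    ultimately show ?thesis by blast
  qed
qed

section \<open>Monomials\<close>

type_synonym expo = "nat \<times> nat \<times> nat \<times> nat \<times> nat"

fun mon :: "expo \<Rightarrow> (nat \<Rightarrow> complex) \<Rightarrow> (nat \<Rightarrow> complex) \<Rightarrow> complex" where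
  "mon (a0,a1,a2,b0,b1) x y = x 0 ^ a0 * x 1 ^ a1 * x 2 ^ a2 * y 0 ^ b0 * y 1 ^ b1"

fun eadd :: "expo \<Rightarrow> expo \<Rightarrow> expo" where
  "eadd (a0,a1,a2,b0,b1) (c0,c1,c2,d0,d1) = (a0+c0,a1+c1,a2+c2,b0+d0,b1+d1)"

fun degx :: "expo \<Rightarrow> nat" where "degx (a0,a1,a2,b0,b1) = a0+a1+a2"
fun degy :: "expo \<Rightarrow> nat" where "degy (a0,a1,a2,b0,b1) = b0+b1"

definition eu :: "nat \<Rightarrow> nat \<Rightarrow> expo" where
  "eu i j = (if i = 0 then 1 else 0, if i = 1 then 1 else 0, if i = 2 then 1 else 0,
             if j = 0 then 1 else 0, if j = 1 then 1 else 0)"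

lemma mon_eadd: "mon (eadd e1 e2) x y = mon e1 x y * mon e2 x y"
  by (cases e1; cases e2) (simp add: power_add algebra_simps)

lemma mon_zero: "mon (0,0,0,0,0) x y = 1" by simp

lemma mon_eu: "i \<le> 2 \<Longrightarrow> j \<le> 1 \<Longrightarrow> mon (eu i j) x y = x i * y j"
proof -
  assume "i \<le> 2" "j \<le> 1"
  hence "i = 0 \<or> i = 1 \<or> i = 2" "j = 0 \<or> j = 1" by arith+
  thus ?thesis unfolding eu_def by (elim disjE) auto
qed

lemma mon_scale_x: "mon e (\<lambda>i. t * x i) y = t ^ degx e * mon e x y"
  by (cases e) (simp add: power_mult_distrib power_add algebra_simps)

lemma mon_scale_y: "mon e x (\<lambda>i. t * y i) = t ^ degy e * mon e x y"
  by (cases e) (simp add: power_mult_distrib power_add algebra_simps)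

definition sumL :: "(complex \<times> expo) list \<Rightarrow> (nat \<Rightarrow> complex) \<Rightarrow> (nat \<Rightarrow> complex) \<Rightarrow> complex" where
  "sumL L x y = sum_list (map (\<lambda>(c,e). c * mon e x y) L)"

lemma sumL_Nil[simp]: "sumL [] x y = 0" by (simp add: sumL_def)
lemma sumL_Cons[simp]: "sumL ((c,e) # L) x y = c * mon e x y + sumL L x y" by (simp add: sumL_def)
lemma sumL_append[simp]: "sumL (L1 @ L2) x y = sumL L1 x y + sumL L2 x y" by (simp add: sumL_def)

definition lmult :: "(complex \<times> expo) list \<Rightarrow> (complex \<times> expo) list \<Rightarrow> (complex \<times> expo) list" where
  "lmult L1 L2 = concat (map (\<lambda>(c1,e1). map (\<lambda>(c2,e2). (c1*c2, eadd e1 e2)) L2) L1)"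

lemma sumL_map_mult: "sumL (map (\<lambda>(c2,e2). (c1*c2, eadd e1 e2)) L2) x y = c1 * mon e1 x y * sumL L2 x y"
proof (induction L2)
  case Nil then show ?case by simp
next
  case (Cons a L2) then show ?case by (cases a) (simp add: mon_eadd algebra_simps)
qed

lemma sumL_lmult: "sumL (lmult L1 L2) x y = sumL L1 x y * sumL L2 x y"
proof (induction L1)
  case Nil then show ?case by (simp add: lmult_def sumL_def)
next
  case (Cons a L1)
  obtain c1 e1 where a: "a = (c1,e1)" by (cases a)
  have "lmult (a # L1) L2 = map (\<lambda>(c2,e2). (c1*c2, eadd e1 e2)) L2 @ lmult L1 L2"
    unfolding lmult_def a by simp
  thus ?case using Cons by (simp add: sumL_map_mult a distrib_right)
qed

lemma polyfun_expand:
  assumes "f \<in> polyfun I"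
  shows "\<exists>L. \<forall>x y. f (Sv b x y) = sumL L x y"
  using assms
proof induct
  case (const c)
  show ?case by (rule exI[of _ "[(c,(0,0,0,0,0))]"]) simp
next
  case (var k)
  show ?case
  proof (cases "rho b k \<in> Sidx")
    case True
    obtain i j where ij: "rho b k = (i,j)" by (cases "rho b k")
    hence "i \<le> 2" "j \<le> 1" using True by (auto simp: Sidx_iff)
    hence "\<forall>x y. Sv b x y k = sumL [(1, eu i j)] x y"
      using True ij by (simp add: Sv_def mon_eu)
    thus ?thesis by blast
  next
    case False
    hence "\<forall>x y. Sv b x y k = sumL [] x y" by (simp add: Sv_def)
    thus ?thesis by blast
  qed
next
  case (add f g)
  then obtain L1 L2 where "\<forall>x y. f (Sv b x y) = sumL L1 x y" "\<forall>x y. g (Sv b x y) = sumL L2 x y" by blast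
  hence "\<forall>x y. f (Sv b x y) + g (Sv b x y) = sumL (L1 @ L2) x y" by simp
  thus ?case by blast
next
  case (mult f g)
  then obtain L1 L2 where "\<forall>x y. f (Sv b x y) = sumL L1 x y" "\<forall>x y. g (Sv b x y) = sumL L2 x y" by blast
  hence "\<forall>x y. f (Sv b x y) * g (Sv b x y) = sumL (lmult L1 L2) x y" by (simp add: sumL_lmult)
  thus ?case by blast
qed

section \<open>Extracting homogeneous components\<close>

lemma poly_slx: "poly (sum_list (map (\<lambda>(c,e). monom (c * mon e x y) (degx e)) L)) t = sumL L (\<lambda>i. t * x i) y"
proof (induction L)
  case Nil then show ?case by simp
next
  case (Cons a L) then show ?case by (cases a) (simp add: poly_monom mon_scale_x algebra_simps)
qed

lemma coeff_slx: "coeff (sum_list (map (\<lambda>(c,e). monom (c * mon e x y) (degx e)) L)) d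
   = sumL (filter (\<lambda>(c,e). degx e = d) L) x y"
proof (induction L)
  case Nil then show ?case by simp
next
  case (Cons a L) then show ?case by (cases a) (simp add: coeff_monom)
qed

lemma poly_sly: "poly (sum_list (map (\<lambda>(c,e). monom (c * mon e x y) (degy e)) L)) t = sumL L x (\<lambda>i. t * y i)"
proof (induction L)
  case Nil then show ?case by simp
next
  case (Cons a L) then show ?case by (cases a) (simp add: poly_monom mon_scale_y algebra_simps)
qed

lemma coeff_sly: "coeff (sum_list (map (\<lambda>(c,e). monom (c * mon e x y) (degy e)) L)) d
   = sumL (filter (\<lambda>(c,e). degy e = d) L) x y"
proof (induction L)
  case Nil then show ?case by simp
next
  case (Cons a L) then show ?case by (cases a) (simp add: coeff_monom)
qed

lemma filter_degx:
  assumes h: "\<And>t x y. sumL L (\<lambda>i. t * x i) y = t ^ d * sumL L x y"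
  shows "sumL L x y = sumL (filter (\<lambda>(c,e). degx e = d) L) x y"
proof -
  define p where "p = sum_list (map (\<lambda>(c,e). monom (c * mon e x y) (degx e)) L)"
  have "poly p = poly (monom (sumL L x y) d)"
    by (rule ext) (simp add: p_def poly_slx h poly_monom mult.commute)
  hence "p = monom (sumL L x y) d" by (simp add: poly_eq_poly_eq_iff)
  hence "coeff p d = sumL L x y" by simp
  thus ?thesis unfolding p_def coeff_slx by simp
qed

lemma filter_degy:
  assumes h: "\<And>t x y. sumL L x (\<lambda>i. t * y i) = t ^ d * sumL L x y"
  shows "sumL L x y = sumL (filter (\<lambda>(c,e). degy e = d) L) x y"
proof -
  define p where "p = sum_list (map (\<lambda>(c,e). monom (c * mon e x y) (degy e)) L)"
  have "poly p = poly (monom (sumL L x y) d)"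
    by (rule ext) (simp add: p_def poly_sly h poly_monom mult.commute)
  hence "p = monom (sumL L x y) d" by (simp add: poly_eq_poly_eq_iff)
  hence "coeff p d = sumL L x y" by simp
  thus ?thesis unfolding p_def coeff_sly by simp
qed

definition Mset :: "nat \<Rightarrow> expo set" where
  "Mset d = {e. degx e = d \<and> degy e = d}"

lemma Mset_sub: "Mset d \<subseteq> (\<lambda>(a0,a1,b0). (a0,a1,d-a0-a1,b0,d-b0)) ` ({..d} \<times> {..d} \<times> {..d})"
proof
  fix e assume "e \<in> Mset d"
  then obtain a0 a1 a2 b0 b1 where e: "e = (a0,a1,a2,b0,b1)" "a0+a1+a2 = d" "b0+b1 = d"
    unfolding Mset_def by (cases e) auto
  hence "e = (\<lambda>(a0,a1,b0). (a0,a1,d-a0-a1,b0,d-b0)) (a0,a1,b0)" by auto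
  moreover have "(a0,a1,b0) \<in> {..d} \<times> {..d} \<times> {..d}" using e by auto
  ultimately show "e \<in> (\<lambda>(a0,a1,b0). (a0,a1,d-a0-a1,b0,d-b0)) ` ({..d} \<times> {..d} \<times> {..d})" by blast
qed

lemma finite_Mset: "finite (Mset d)"
  using Mset_sub by (rule finite_subset) auto

lemma card_Mset: "card (Mset d) \<le> (d+1)^3"
proof -
  have "card (Mset d) \<le> card ((\<lambda>(a0,a1,b0). (a0,a1,d-a0-a1,b0,d-b0)) ` ({..d} \<times> {..d} \<times> {..d}))"
    by (rule card_mono[OF _ Mset_sub]) auto
  also have "\<dots> \<le> card ({..d} \<times> {..d} \<times> {..d})" by (rule card_image_le) auto
  also have "\<dots> = (d+1)^3" by (simp add: card_cartesian_product power3_eq_cube)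
  finally show ?thesis .
qed

definition coefL :: "(complex \<times> expo) list \<Rightarrow> expo \<Rightarrow> complex" where
  "coefL L e = sum_list (map (\<lambda>(c,e'). if e' = e then c else 0) L)"

lemma sumL_as_sum:
  assumes "finite M" "\<forall>(c,e)\<in>set L. e \<in> M"
  shows "sumL L x y = (\<Sum>e\<in>M. coefL L e * mon e x y)"
  using assms(2)
proof (induction L)
  case Nil then show ?case by (simp add: coefL_def)
next
  case (Cons a L)
  obtain c e0 where a: "a = (c,e0)" by (cases a)
  have e0: "e0 \<in> M" using Cons.prems a by auto
  have IH: "sumL L x y = (\<Sum>e\<in>M. coefL L e * mon e x y)" using Cons by auto
  have "(\<Sum>e\<in>M. coefL (a # L) e * mon e x y)
      = (\<Sum>e\<in>M. (if e0 = e then c * mon e x y else 0) + coefL L e * mon e x y)"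
    unfolding a coefL_def by (intro sum.cong) (auto simp: algebra_simps)
  also have "\<dots> = c * mon e0 x y + (\<Sum>e\<in>M. coefL L e * mon e x y)"
    using assms(1) e0 by (simp add: sum.distrib)
  finally show ?case unfolding a using IH by simp
qed

lemma homog_expand:
  assumes h: "homog P7idx d f"
  shows "\<exists>L. (\<forall>(c,e)\<in>set L. e \<in> Mset d) \<and> (\<forall>x y. f (Sv b x y) = sumL L x y)"
proof -
  obtain L where L: "\<forall>x y. f (Sv b x y) = sumL L x y"
    using polyfun_expand[of f P7idx b] h unfolding homog_def by blast
  have sx: "f (Sv b (\<lambda>i. t * x i) y) = t ^ d * f (Sv b x y)" for t x y
    unfolding Sv_scale_x by (rule homog_scale[OF h])
  have sy: "f (Sv b x (\<lambda>i. t * y i)) = t ^ d * f (Sv b x y)" for t x y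
    unfolding Sv_scale_y by (rule homog_scale[OF h])
  define L1 where "L1 = filter (\<lambda>(c,e). degx e = d) L"
  have L1: "f (Sv b x y) = sumL L1 x y" for x y
    unfolding L1_def L[rule_format] by (rule filter_degx) (simp add: sx L[rule_format, symmetric])
  define L2 where "L2 = filter (\<lambda>(c,e). degy e = d) L1"
  have L2: "f (Sv b x y) = sumL L2 x y" for x y
    unfolding L2_def L1 by (rule filter_degy) (simp add: sy L1[symmetric])
  have "\<forall>(c,e)\<in>set L2. e \<in> Mset d" unfolding L2_def L1_def Mset_def by auto
  thus ?thesis using L2 by blast
qed

definition Dfull :: "bool \<Rightarrow> (nat \<times> nat \<Rightarrow> complex) set set" where
  "Dfull b = Dsub b {0,1,2} {0,1}"

definition indepW :: "(nat \<times> nat \<Rightarrow> complex) set set \<Rightarrow> nat \<Rightarrow> nat \<Rightarrow> bool" where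
  "indepW W d n \<longleftrightarrow> (\<exists>fs. (\<forall>i<n. homog P7idx d (fs i)) \<and>
      (\<forall>a. (\<forall>p\<in>W. \<forall>v\<in>p. (\<Sum>i<n. a i * fs i v) = 0) \<longrightarrow> (\<forall>i<n. a i = 0)))"

lemma Dsub_vec': "p \<in> Dsub b A B \<Longrightarrow> v \<in> p \<Longrightarrow> \<exists>x y. v = Sv b x y"
  using Dsub_vec by blast

lemma indep_bound:
  assumes W: "W \<subseteq> Dfull b" and ind: "indepW W d n"
  shows "n \<le> (d+1)^3"
proof -
  obtain fs where hom: "\<forall>i<n. homog P7idx d (fs i)"
    and ind': "\<forall>a. (\<forall>p\<in>W. \<forall>v\<in>p. (\<Sum>i<n. a i * fs i v) = 0) \<longrightarrow> (\<forall>i<n. a i = 0)"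
    using ind unfolding indepW_def by blast
  have "\<forall>i\<in>{..<n}. \<exists>L. (\<forall>(c,e)\<in>set L. e \<in> Mset d) \<and> (\<forall>x y. fs i (Sv b x y) = sumL L x y)"
    using homog_expand hom by blast
  from bchoice[OF this] obtain LL where LL: "\<forall>i\<in>{..<n}. (\<forall>(c,e)\<in>set (LL i). e \<in> Mset d) \<and>
      (\<forall>x y. fs i (Sv b x y) = sumL (LL i) x y)" by blast
  define k where "k i e = coefL (LL i) e" for i e
  have rep: "fs i (Sv b x y) = (\<Sum>e\<in>Mset d. k i e * mon e x y)" if "i < n" for i x y
  proof -
    have "i \<in> {..<n}" using that by simp
    hence l1: "\<forall>(c,e)\<in>set (LL i). e \<in> Mset d" and l2: "\<forall>x y. fs i (Sv b x y) = sumL (LL i) x y"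
      using LL by blast+
    have "fs i (Sv b x y) = sumL (LL i) x y" using l2 by blast
    also have "\<dots> = (\<Sum>e\<in>Mset d. coefL (LL i) e * mon e x y)" by (rule sumL_as_sum[OF finite_Mset l1])
    finally show ?thesis unfolding k_def .
  qed
  show ?thesis
  proof (rule ccontr)
    assume "\<not> n \<le> (d+1)^3"
    hence "card (Mset d) < card {..<n}" using card_Mset[of d] by simp
    hence "\<exists>a. (\<exists>i\<in>{..<n}. a i \<noteq> 0) \<and> (\<forall>e\<in>Mset d. (\<Sum>i\<in>{..<n}. a i * k i e) = 0)"
      by (rule gauss[OF finite_Mset finite_lessThan])
    then obtain a where a0: "(\<exists>i\<in>{..<n}. a i \<noteq> 0) \<and> (\<forall>e\<in>Mset d. (\<Sum>i\<in>{..<n}. a i * k i e) = 0)"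
      by (rule exE)
    note a = a0[THEN conjunct1] a0[THEN conjunct2]
    have "\<forall>p\<in>W. \<forall>v\<in>p. (\<Sum>i<n. a i * fs i v) = 0"
    proof (intro ballI)
      fix p v assume pv: "p \<in> W" "v \<in> p"
      have "p \<in> Dsub b {0,1,2} {0,1}" using W pv(1) unfolding Dfull_def by blast
      from Dsub_vec'[OF this pv(2)] obtain x y where v: "v = Sv b x y" by (elim exE)
      have "(\<Sum>i<n. a i * fs i v) = (\<Sum>i<n. a i * (\<Sum>e\<in>Mset d. k i e * mon e x y))"
        unfolding v by (intro sum.cong) (auto simp: rep)
      also have "\<dots> = (\<Sum>e\<in>Mset d. (\<Sum>i<n. a i * k i e) * mon e x y)"
        by (simp add: sum_distrib_left sum_distrib_right mult.assoc sum.swap[of _ "{..<n}"])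
      also have "\<dots> = 0" using a(2) by simp
      finally show "(\<Sum>i<n. a i * fs i v) = 0" .
    qed
    hence "\<forall>i<n. a i = 0" using ind' by blast
    thus False using a(1) by auto
  qed
qed

lemma indepW_0: "indepW W d 0"
  unfolding indepW_def by auto

lemma indepW_mono:
  assumes "indepW W d n" "m \<le> n"
  shows "indepW W d m"
proof -
  obtain fs where hom: "\<forall>i<n. homog P7idx d (fs i)"
    and ind: "\<forall>a. (\<forall>p\<in>W. \<forall>v\<in>p. (\<Sum>i<n. a i * fs i v) = 0) \<longrightarrow> (\<forall>i<n. a i = 0)"
    using assms(1) unfolding indepW_def by blast
  have "\<forall>a. (\<forall>p\<in>W. \<forall>v\<in>p. (\<Sum>i<m. a i * fs i v) = 0) \<longrightarrow> (\<forall>i<m. a i = 0)"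
  proof (intro allI impI)
    fix a i assume h: "\<forall>p\<in>W. \<forall>v\<in>p. (\<Sum>i<m. a i * fs i v) = 0" and i: "i < m"
    define a' where "a' j = (if j < m then a j else 0)" for j
    have "(\<Sum>j<n. a' j * fs j v) = (\<Sum>j<m. a j * fs j v)" for v
    proof -
      have "(\<Sum>j<n. a' j * fs j v) = (\<Sum>j\<in>{..<m}. a' j * fs j v) + (\<Sum>j\<in>{..<n} - {..<m}. a' j * fs j v)"
        using assms(2) by (subst sum.subset_diff[of "{..<m}" "{..<n}"]) auto
      also have "(\<Sum>j\<in>{..<n} - {..<m}. a' j * fs j v) = 0" unfolding a'_def by (intro sum.neutral) auto
      also have "(\<Sum>j\<in>{..<m}. a' j * fs j v) = (\<Sum>j<m. a j * fs j v)" unfolding a'_def by simp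
      finally show ?thesis by simp
    qed
    hence "\<forall>p\<in>W. \<forall>v\<in>p. (\<Sum>j<n. a' j * fs j v) = 0" using h by simp
    hence all0: "\<forall>j<n. a' j = 0" using ind by blast
    have "i < n" using i assms(2) by simp
    hence "a' i = 0" using all0 by blast
    thus "a i = 0" unfolding a'_def using i by simp
  qed
  moreover have "\<forall>i<m. homog P7idx d (fs i)" using hom assms(2) by simp
  ultimately show ?thesis unfolding indepW_def by blast
qed

lemma indepW_base:
  assumes "p \<in> W" "W \<subseteq> Proj P7idx"
  shows "indepW W d 1"
proof -
  have "p \<in> Proj P7idx" using assms by blast
  then obtain u where u: "u \<in> vecs P7idx" "u \<noteq> (\<lambda>_. 0)" "p = pclass u" unfolding Proj_iff by blast
  obtain k where k: "u k \<noteq> 0" using u(2) by (metis (mono_tags) ext)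
  hence kP: "k \<in> P7idx" using u(1) unfolding vecs_def by blast
  show ?thesis unfolding indepW_def
  proof (rule exI[of _ "\<lambda>_ v. v k ^ d"], intro conjI allI impI)
    show "\<And>i. i < 1 \<Longrightarrow> homog P7idx d (\<lambda>v. v k ^ d)" using homog_pow[OF kP] by blast
    fix a :: "nat \<Rightarrow> complex" and i :: nat
    assume h: "\<forall>p\<in>W. \<forall>v\<in>p. (\<Sum>i<1. a i * v k ^ d) = 0" and i: "i < 1"
    have "a 0 * u k ^ d = 0" using h assms(1) pclass_self[of u] u(3) by fastforce
    thus "a i = 0" using i k by simp
  qed
qed

lemma sum_split_add: "(\<Sum>i<a+(b::nat). g i) = (\<Sum>i<a. g i) + (\<Sum>i<b. g (a+i))"
  by (induction b) (simp_all add: add_ac)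

lemma indepW_step:
  assumes Wc: "zariski_closed P7idx W" and Wi: "zar_irreducible P7idx W"
    and Zc: "zariski_closed P7idx Z" and ZW: "Z \<subseteq> W" "Z \<noteq> W" and Zne: "Z \<noteq> {}"
  shows "\<exists>e\<ge>1. \<forall>d a b'. indepW W d a \<longrightarrow> indepW Z (d+e) b' \<longrightarrow> indepW W (d+e) (a+b')"
proof -
  have WP: "W \<subseteq> Proj P7idx" using Wc by (rule closed_subset_Proj)
  obtain p0 where p0: "p0 \<in> W" "p0 \<notin> Z" using ZW by blast
  have p0P: "p0 \<in> Proj P7idx" using p0 WP by blast
  obtain f e where f: "homog P7idx e f" "\<forall>q\<in>Z. vanish f q" "\<not> vanish f p0"
    by (rule closed_vanishing_witness[OF Zc p0P p0(2)])
  have e1: "e \<ge> 1"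
  proof (rule ccontr)
    assume "\<not> e \<ge> 1" hence e0: "e = 0" by simp
    obtain q where "q \<in> Z" using Zne by blast
    hence "q \<in> Proj P7idx" using ZW WP by blast
    then obtain u where "q = pclass u" unfolding Proj_iff by blast
    hence "f u = 0" using f(2) \<open>q \<in> Z\<close> pclass_self unfolding vanish_def by blast
    hence "f (\<lambda>_. 0) = 0" using homog_deg0_const[of P7idx f u] f(1) e0 by simp
    hence "\<forall>v. f v = 0" using homog_deg0_const[of P7idx f] f(1) e0 by metis
    thus False using f(3) unfolding vanish_def by blast
  qed
  have main: "indepW W (d+e) (a+b')" if hW: "indepW W d a" and hZ: "indepW Z (d+e) b'" for d a b'
  proof -
    obtain fs where fsh: "\<forall>i<a. homog P7idx d (fs i)"
      and fsi: "\<forall>c. (\<forall>p\<in>W. \<forall>v\<in>p. (\<Sum>i<a. c i * fs i v) = 0) \<longrightarrow> (\<forall>i<a. c i = 0)"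
      using hW unfolding indepW_def by blast
    obtain hs where hsh: "\<forall>i<b'. homog P7idx (d+e) (hs i)"
      and hsi: "\<forall>c. (\<forall>p\<in>Z. \<forall>v\<in>p. (\<Sum>i<b'. c i * hs i v) = 0) \<longrightarrow> (\<forall>i<b'. c i = 0)"
      using hZ unfolding indepW_def by blast
    define gs where "gs i = (if i < a then (\<lambda>v. f v * fs i v) else hs (i - a))" for i
    have gsh: "\<forall>i<a+b'. homog P7idx (d+e) (gs i)"
    proof (intro allI impI)
      fix i assume i: "i < a + b'"
      show "homog P7idx (d+e) (gs i)"
      proof (cases "i < a")
        case True
        have "homog P7idx (e+d) (\<lambda>v. f v * fs i v)" using homog_mult f(1) fsh True by blast
        thus ?thesis unfolding gs_def using True by (simp add: add.commute)
      next
        case False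
        thus ?thesis unfolding gs_def using hsh i by simp
      qed
    qed
    have gsi: "\<forall>c. (\<forall>p\<in>W. \<forall>v\<in>p. (\<Sum>i<a+b'. c i * gs i v) = 0) \<longrightarrow> (\<forall>i<a+b'. c i = 0)"
    proof (intro allI impI)
      fix c i assume H: "\<forall>p\<in>W. \<forall>v\<in>p. (\<Sum>i<a+b'. c i * gs i v) = 0" and i: "i < a + b'"
      have spl: "(\<Sum>i<a+b'. c i * gs i v) = f v * (\<Sum>i<a. c i * fs i v) + (\<Sum>i<b'. c (a+i) * hs i v)" for v
        unfolding sum_split_add gs_def by (simp add: sum_distrib_left algebra_simps)
      have "\<forall>p\<in>Z. \<forall>v\<in>p. (\<Sum>i<b'. c (a+i) * hs i v) = 0"
      proof (intro ballI)
        fix p v assume "p \<in> Z" "v \<in> p"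
        hence "f v = 0" using f(2) unfolding vanish_def by blast
        have "p \<in> W" using \<open>p \<in> Z\<close> ZW by blast
        hence "(\<Sum>i<a+b'. c i * gs i v) = 0" using H \<open>v \<in> p\<close> by blast
        hence "f v * (\<Sum>i<a. c i * fs i v) + (\<Sum>i<b'. c (a+i) * hs i v) = 0" unfolding spl .
        thus "(\<Sum>i<b'. c (a+i) * hs i v) = 0" using \<open>f v = 0\<close> by simp
      qed
      hence cb: "\<forall>i<b'. c (a+i) = 0" using hsi[rule_format, of "\<lambda>i. c (a+i)"] by simp
      define G where "G v = (\<Sum>i<a. c i * fs i v)" for v
      have Gh: "homog P7idx d G" unfolding G_def
        by (intro homog_sum homog_smult) (use fsh in auto)
      have fG: "\<forall>p\<in>W. \<forall>v\<in>p. f v * G v = 0"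
      proof (intro ballI)
        fix p v assume "p \<in> W" "v \<in> p"
        hence "(\<Sum>i<a+b'. c i * gs i v) = 0" using H by blast
        hence "f v * (\<Sum>i<a. c i * fs i v) + (\<Sum>i<b'. c (a+i) * hs i v) = 0" unfolding spl .
        thus "f v * G v = 0" using cb unfolding G_def by simp
      qed
      have "W \<subseteq> {p \<in> Proj P7idx. vanish f p} \<union> {p \<in> Proj P7idx. vanish G p}"
      proof
        fix p assume p: "p \<in> W"
        hence "p \<in> Proj P7idx" using WP by blast
        then obtain u where u: "p = pclass u" unfolding Proj_iff by blast
        have "f u * G u = 0" using fG p u pclass_self by blast
        hence "vanish f p \<or> vanish G p" unfolding u using vanish_pclass[OF f(1)] vanish_pclass[OF Gh] by auto
        thus "p \<in> {p \<in> Proj P7idx. vanish f p} \<union> {p \<in> Proj P7idx. vanish G p}" using p WP by blast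
      qed
      hence "W \<subseteq> {p \<in> Proj P7idx. vanish f p} \<or> W \<subseteq> {p \<in> Proj P7idx. vanish G p}"
        using Wi closed_single[OF f(1)] closed_single[OF Gh] unfolding zar_irreducible_def by blast
      hence "W \<subseteq> {p \<in> Proj P7idx. vanish G p}" using f(3) p0(1) by blast
      hence "\<forall>p\<in>W. \<forall>v\<in>p. (\<Sum>i<a. c i * fs i v) = 0" unfolding vanish_def G_def by blast
      hence ca: "\<forall>i<a. c i = 0" using fsi[rule_format, of c] by simp
      show "c i = 0"
      proof (cases "i < a")
        case True thus ?thesis using ca by blast
      next
        case False
        hence "i = a + (i - a)" "i - a < b'" using i by auto
        thus ?thesis using cb by metis
      qed
    qed
    show ?thesis unfolding indepW_def using gsh gsi by blast
  qed
  show ?thesis using e1 main by blast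
qed

lemma indepW_lift:
  assumes step: "\<forall>d a b'. indepW W d a \<longrightarrow> indepW Z (d+e) b' \<longrightarrow> indepW W (d+e) (a+b')"
  shows "indepW W d a \<Longrightarrow> indepW W (d + j*e) a"
proof (induction j)
  case 0 thus ?case by simp
next
  case (Suc j)
  hence "indepW W (d + j*e + e) (a + 0)" using step indepW_0 by blast
  thus ?case by (simp add: algebra_simps)
qed

lemma ch2: "2 * (Suc (Suc m) choose Suc (Suc 0)) = Suc (Suc m) * Suc m"
proof (induction m)
  case 0 then show ?case by simp
next
  case (Suc m)
  have "Suc (Suc (Suc m)) choose Suc (Suc 0) = Suc (Suc m) + (Suc (Suc m) choose Suc (Suc 0))"
    by simp
  thus ?case using Suc by (simp add: algebra_simps)
qed

lemma ch3: "6 * (Suc (Suc (Suc m)) choose Suc (Suc (Suc 0))) = Suc (Suc (Suc m)) * Suc (Suc m) * Suc m"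
proof (induction m)
  case 0 then show ?case by simp
next
  case (Suc m)
  have "Suc (Suc (Suc (Suc m))) choose Suc (Suc (Suc 0)) =
      (Suc (Suc (Suc m)) choose Suc (Suc 0)) + (Suc (Suc (Suc m)) choose Suc (Suc (Suc 0)))"
    by simp
  moreover have "2 * (Suc (Suc (Suc m)) choose Suc (Suc 0)) = Suc (Suc (Suc m)) * Suc (Suc m)"
    using ch2[of "Suc m"] by simp
  ultimately show ?case using Suc by (simp add: algebra_simps)
qed

lemma ch4: "24 * (Suc (Suc (Suc (Suc m))) choose Suc (Suc (Suc (Suc 0)))) =
    Suc (Suc (Suc (Suc m))) * Suc (Suc (Suc m)) * Suc (Suc m) * Suc m"
proof (induction m)
  case 0 then show ?case by simp
next
  case (Suc m)
  have "Suc (Suc (Suc (Suc (Suc m)))) choose Suc (Suc (Suc (Suc 0))) =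
      (Suc (Suc (Suc (Suc m))) choose Suc (Suc (Suc 0))) + (Suc (Suc (Suc (Suc m))) choose Suc (Suc (Suc (Suc 0))))"
    by simp
  moreover have "6 * (Suc (Suc (Suc (Suc m))) choose Suc (Suc (Suc 0))) = Suc (Suc (Suc (Suc m))) * Suc (Suc (Suc m)) * Suc (Suc m)"
    using ch3[of "Suc m"] by simp
  ultimately show ?case using Suc by (simp add: algebra_simps)
qed

lemma ch4': "24 * ((M + 4) choose 4) = (M+4)*(M+3)*(M+2)*(M+1)"
proof -
  have "M + 4 = Suc (Suc (Suc (Suc M)))" "(4::nat) = Suc (Suc (Suc (Suc 0)))" "M+3 = Suc (Suc (Suc M))"
    "M+2 = Suc (Suc M)" "M + 1 = Suc M" by simp_all
  thus ?thesis using ch4[of M] by metis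
qed

lemma arith_contra:
  assumes E: "1 \<le> (E::nat)" and M: "M = 192 * E^3 + 5"
  shows "((M+4)*E+1)^3 < (M+4) choose 4"
proof -
  have M5: "M \<ge> 5" using M by simp
  have "M*M*M*M \<le> (M+4)*(M+3)*(M+2)*(M+1)" by (intro mult_le_mono) auto
  hence A: "M*M*M*M \<le> 24 * ((M + 4) choose 4)" using ch4' by simp
  have "(M+4)*E+1 \<le> (M+4)*E + E" using E by simp
  also have "\<dots> = (M+5)*E" by (simp add: algebra_simps)
  also have "\<dots> \<le> (2*M)*E" using M5 by (intro mult_right_mono) auto
  finally have "((M+4)*E+1)^3 \<le> (2*M*E)^3" by (intro power_mono) auto
  also have "(2*M*E)^3 = 8 * (M*M*M) * E^3" by (simp add: power3_eq_cube algebra_simps)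
  finally have B: "24 * ((M+4)*E+1)^3 \<le> (M*M*M) * (192 * E^3)" by simp
  have "192 * E^3 < M" using M by simp
  moreover have "M*M*M > 0" using M5 by simp
  ultimately have S: "(M*M*M) * (192 * E^3) < (M*M*M) * M" by (intro mult_strict_left_mono) auto
  have A': "(M*M*M) * M \<le> 24 * ((M + 4) choose 4)" using A by (simp add: mult.assoc)
  have "24 * ((M+4)*E+1)^3 < 24 * ((M + 4) choose 4)"
    by (rule le_less_trans[OF B less_le_trans[OF S A']])
  thus ?thesis by simp
qed

lemma irr_ne: "zar_irreducible I X \<Longrightarrow> X \<noteq> {}"
  unfolding zar_irreducible_def by (elim conjE)

lemma chain_bound:
  assumes Z: "\<forall>k\<le>n. Z k \<subseteq> Dfull b \<and> zariski_closed P7idx (Z k) \<and> zar_irreducible P7idx (Z k)"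
    and S: "\<forall>k<n. Z k \<subset> Z (Suc k)"
  shows "n \<le> 3"
proof (rule ccontr)
  assume "\<not> n \<le> 3"
  hence n4: "4 \<le> n" by simp
  have "\<forall>k\<in>{..<4::nat}. \<exists>e. e \<ge> 1 \<and> (\<forall>d a b'. indepW (Z (Suc k)) d a \<longrightarrow> indepW (Z k) (d+e) b' \<longrightarrow>
        indepW (Z (Suc k)) (d+e) (a+b'))"
  proof
    fix k :: nat assume "k \<in> {..<4}"
    hence k: "k < n" "Suc k \<le> n" "k \<le> n" using n4 by auto
    have c1: "zariski_closed P7idx (Z (Suc k))" "zar_irreducible P7idx (Z (Suc k))" using Z k by blast+
    have c2: "zariski_closed P7idx (Z k)" "zar_irreducible P7idx (Z k)" using Z k by blast+
    have s: "Z k \<subseteq> Z (Suc k)" "Z k \<noteq> Z (Suc k)" using S k by blast+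
    have ne: "Z k \<noteq> {}" using c2(2) unfolding zar_irreducible_def by blast
    show "\<exists>e. e \<ge> 1 \<and> (\<forall>d a b'. indepW (Z (Suc k)) d a \<longrightarrow> indepW (Z k) (d+e) b' \<longrightarrow>
        indepW (Z (Suc k)) (d+e) (a+b'))"
      using indepW_step[OF c1 c2(1) s ne] by blast
  qed
  from bchoice[OF this] obtain e where e: "\<forall>k\<in>{..<4::nat}. e k \<ge> 1 \<and> (\<forall>d a b'. indepW (Z (Suc k)) d a \<longrightarrow>
      indepW (Z k) (d + e k) b' \<longrightarrow> indepW (Z (Suc k)) (d + e k) (a+b'))" by blast
  define E where "E = (\<Prod>k<4. e k)"
  have E1: "E \<ge> 1" unfolding E_def using e by (intro prod_ge_1) auto
  have growth: "indepW (Z k) (m*E) (m choose k)" if "k \<le> 4" for k m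
    using that
  proof (induction k arbitrary: m)
    case 0
    have Z0: "Z 0 \<subseteq> Dfull b \<and> zariski_closed P7idx (Z 0) \<and> zar_irreducible P7idx (Z 0)"
      using Z by blast
    hence "Z 0 \<noteq> {}" by (intro irr_ne[of P7idx]) (elim conjE)
    then obtain p where p: "p \<in> Z 0" by blast
    have "Z 0 \<subseteq> Proj P7idx" using Z0 closed_subset_Proj by blast
    hence "indepW (Z 0) (m*E) 1" using p by (intro indepW_base)
    thus ?case by simp
  next
    case (Suc k)
    have IHk: "indepW (Z k) (m*E) (m choose k)" for m using Suc by simp
    have kk: "k \<in> {..<4}" using Suc.prems by simp
    have ek: "e k \<ge> 1" and st: "\<forall>d a b'. indepW (Z (Suc k)) d a \<longrightarrow> indepW (Z k) (d + e k) b' \<longrightarrow>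
        indepW (Z (Suc k)) (d + e k) (a+b')" using e kk by blast+
    have "e k dvd E" unfolding E_def using kk by (intro dvd_prodI) auto
    then obtain r where r: "E = e k * r" by (elim dvdE)
    have r1: "r \<ge> 1" using E1 r by (cases r) auto
    show ?case
    proof (induction m)
      case 0 show ?case by (simp add: indepW_0)
    next
      case (Suc m)
      have h1: "indepW (Z (Suc k)) (m*E + (r-1)*e k) (m choose Suc k)"
        by (rule indepW_lift[OF st Suc.IH])
      have "m choose k \<le> Suc m choose k" by (cases k) auto
      hence h2: "indepW (Z k) (Suc m * E) (m choose k)" using IHk indepW_mono by blast
      have deg: "m*E + (r-1)*e k + e k = Suc m * E"
      proof -
        have "(r-1)*e k + e k = r * e k" using r1 by (cases r) auto
        thus ?thesis unfolding r by (simp add: algebra_simps)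
      qed
      have h2': "indepW (Z k) (m*E + (r-1)*e k + e k) (m choose k)" unfolding deg by (rule h2)
      have "indepW (Z (Suc k)) (m*E + (r-1)*e k + e k) ((m choose Suc k) + (m choose k))"
        using st h1 h2' by blast
      thus ?case unfolding deg by (simp add: add.commute)
    qed
  qed
  define M where "M = 192 * E^3 + 5"
  have "indepW (Z 4) ((M+4)*E) ((M+4) choose 4)" by (rule growth) simp
  moreover have "Z 4 \<subseteq> Dfull b" using Z n4 by blast
  ultimately have "(M+4) choose 4 \<le> ((M+4)*E+1)^3" using indep_bound by blast
  thus False using arith_contra[OF E1 M_def] by simp
qed

lemma Dsub_mono: "A \<subseteq> A' \<Longrightarrow> B \<subseteq> B' \<Longrightarrow> Dsub b A B \<subseteq> Dsub b A' B'"
  unfolding Dsub_def by blast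

definition dlt :: "nat \<Rightarrow> nat \<Rightarrow> complex" where "dlt i = (\<lambda>k. if k = i then 1 else 0)"

lemma dlt_in: "i \<in> A \<Longrightarrow> j \<in> B \<Longrightarrow> pclass (Sv b (dlt i) (dlt j)) \<in> Dsub b A B"
  unfolding dlt_def by (rule Dsub_nonempty)

lemma dlt_notin:
  assumes "i \<le> 2" "j \<le> 1" "i \<notin> A \<or> j \<notin> B"
  shows "pclass (Sv b (dlt i) (dlt j)) \<notin> Dsub b A B"
proof
  assume h: "pclass (Sv b (dlt i) (dlt j)) \<in> Dsub b A B"
  have "Sv b (dlt i) (dlt j) \<in> pclass (Sv b (dlt i) (dlt j))" by (rule pclass_self)
  from Dsub_vec[OF h this] obtain x y where xy: "Sv b (dlt i) (dlt j) = Sv b x y"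
    "\<forall>i. i \<notin> A \<longrightarrow> x i = 0" "\<forall>j. j \<notin> B \<longrightarrow> y j = 0" by blast
  have ij: "(i,j) \<in> Sidx" using assms by (simp add: Sidx_iff)
  have "Sv b (dlt i) (dlt j) (rho b (i,j)) = 1" using Sv_rho[OF ij] unfolding dlt_def by simp
  moreover have "Sv b x y (rho b (i,j)) = 0" using Sv_rho[OF ij, of b x y] xy(2,3) assms(3) by auto
  ultimately show False using xy(1) by simp
qed

lemma Dfull_Proj: "Dfull b \<subseteq> Proj P7idx"
  unfolding Dfull_def by (rule Dsub_Proj) auto

lemma Dfull_closed: "zariski_closed P7idx (Dfull b)"
  unfolding Dfull_def by (rule Dsub_closed) auto

lemma Dfull_irreducible: "zar_irreducible P7idx (Dfull b)"
  unfolding Dfull_def by (rule Dsub_irreducible) auto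

lemma zar_dim_Dfull: "zar_dim P7idx (Dfull b) = 3"
  unfolding zar_dim_def
proof (rule Greatest_equality)
  define Zc where "Zc k = (if k = 0 then Dsub b {0} {0} else if k = 1 then Dsub b {0,1} {0}
      else if k = 2 then Dsub b {0,1,2} {0} else Dsub b {0,1,2} {0,1})" for k :: nat
  have Z0: "Zc 0 = Dsub b {0} {0}" and Z1: "Zc 1 = Dsub b {0,1} {0}" and Z2: "Zc 2 = Dsub b {0,1,2} {0}"
    and Z3: "Zc 3 = Dsub b {0,1,2} {0,1}" unfolding Zc_def by simp_all
  have good: "Zc k \<subseteq> Dfull b \<and> zariski_closed P7idx (Zc k) \<and> zar_irreducible P7idx (Zc k)"
    if "k \<le> 3" for k
  proof -
    have "k = 0 \<or> k = 1 \<or> k = 2 \<or> k = 3" using that by arith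
    thus ?thesis unfolding Dfull_def
      by (elim disjE; simp only: Z0 Z1 Z2 Z3; intro conjI Dsub_mono Dsub_closed Dsub_irreducible) auto
  qed
  have strict: "Zc k \<subset> Zc (Suc k)" if "k < 3" for k
  proof -
    have "k = 0 \<or> k = 1 \<or> k = 2" using that by arith
    moreover have "Zc 0 \<subset> Zc 1"
    proof -
      have "Zc 0 \<subseteq> Zc 1" unfolding Z0 Z1 by (intro Dsub_mono) auto
      moreover have "pclass (Sv b (dlt 1) (dlt 0)) \<in> Zc 1" unfolding Z1 by (intro dlt_in) auto
      moreover have "pclass (Sv b (dlt 1) (dlt 0)) \<notin> Zc 0" unfolding Z0 by (intro dlt_notin) auto
      ultimately show ?thesis by blast
    qed
    moreover have "Zc 1 \<subset> Zc 2"
    proof -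
      have "Zc 1 \<subseteq> Zc 2" unfolding Z1 Z2 by (intro Dsub_mono) auto
      moreover have "pclass (Sv b (dlt 2) (dlt 0)) \<in> Zc 2" unfolding Z2 by (intro dlt_in) auto
      moreover have "pclass (Sv b (dlt 2) (dlt 0)) \<notin> Zc 1" unfolding Z1 by (intro dlt_notin) auto
      ultimately show ?thesis by blast
    qed
    moreover have "Zc 2 \<subset> Zc 3"
    proof -
      have "Zc 2 \<subseteq> Zc 3" unfolding Z2 Z3 by (intro Dsub_mono) auto
      moreover have "pclass (Sv b (dlt 0) (dlt 1)) \<in> Zc 3" unfolding Z3 by (intro dlt_in) auto
      moreover have "pclass (Sv b (dlt 0) (dlt 1)) \<notin> Zc 2" unfolding Z2 by (intro dlt_notin) auto
      ultimately show ?thesis by blast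
    qed
    ultimately show ?thesis by (elim disjE) (simp_all add: numeral_eq_Suc)
  qed
  show "\<exists>Z. (\<forall>k\<le>3. Z k \<subseteq> Dfull b \<and> zariski_closed P7idx (Z k) \<and> zar_irreducible P7idx (Z k)) \<and>
      (\<forall>k<3. Z k \<subset> Z (Suc k))"
    using good strict by blast
next
  fix n
  assume "\<exists>Z. (\<forall>k\<le>n. Z k \<subseteq> Dfull b \<and> zariski_closed P7idx (Z k) \<and> zar_irreducible P7idx (Z k)) \<and>
      (\<forall>k<n. Z k \<subset> Z (Suc k))"
  then obtain Z where "\<forall>k\<le>n. Z k \<subseteq> Dfull b \<and> zariski_closed P7idx (Z k) \<and> zar_irreducible P7idx (Z k)"
    "\<forall>k<n. Z k \<subset> Z (Suc k)" by blast
  thus "n \<le> 3" by (rule chain_bound)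
qed

definition dl :: "nat \<times> nat \<Rightarrow> nat \<times> nat \<Rightarrow> complex" where
  "dl a i = (if a = i then 1 else 0)"

lemma upd_coord: "(v(i := v i + t)) a = v a + dl a i * t"
  by (simp add: dl_def)

lemma partial_coord: "partial_fn (\<lambda>w. w a) i v = dl a i"
proof -
  have e: "(\<lambda>t. (v(i := v i + t)) a) = (\<lambda>t. v a + dl a i * t)" by (rule ext) (rule upd_coord)
  have "((\<lambda>t. v a + dl a i * t) has_field_derivative dl a i) (at 0)"
    by (auto intro!: derivative_eq_intros)
  hence "deriv (\<lambda>t. v a + dl a i * t) 0 = dl a i" by (rule DERIV_imp_deriv)
  thus ?thesis unfolding partial_fn_def e .
qed

lemma partial_quad: "partial_fn (\<lambda>w. w a * w b' - w c' * w d') i v =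
    dl a i * v b' + v a * dl b' i - (dl c' i * v d' + v c' * dl d' i)"
proof -
  have e: "(\<lambda>t. (v(i := v i + t)) a * (v(i := v i + t)) b' - (v(i := v i + t)) c' * (v(i := v i + t)) d') =
    (\<lambda>t. (v a + dl a i * t) * (v b' + dl b' i * t) - (v c' + dl c' i * t) * (v d' + dl d' i * t))"
    by (rule ext) (simp only: upd_coord)
  have "((\<lambda>t. (v a + dl a i * t) * (v b' + dl b' i * t) - (v c' + dl c' i * t) * (v d' + dl d' i * t))
     has_field_derivative (dl a i * v b' + v a * dl b' i - (dl c' i * v d' + v c' * dl d' i))) (at 0)"
    by (auto intro!: derivative_eq_intros simp: algebra_simps)
  hence "deriv (\<lambda>t. (v a + dl a i * t) * (v b' + dl b' i * t) - (v c' + dl c' i * t) * (v d' + dl d' i * t)) 0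
     = dl a i * v b' + v a * dl b' i - (dl c' i * v d' + v c' * dl d' i)" by (rule DERIV_imp_deriv)
  thus ?thesis unfolding partial_fn_def e .
qed

lemma minor_eq: "minor b i i' j j' = (\<lambda>w. w (rho b (i,j)) * w (rho b (i',j')) - w (rho b (i,j')) * w (rho b (i',j)))"
  unfolding minor_def by (rule ext) simp

lemma partial_minor: "partial_fn (minor b i i' j j') col v =
   dl (rho b (i,j)) col * v (rho b (i',j')) + v (rho b (i,j)) * dl (rho b (i',j')) col
   - (dl (rho b (i,j')) col * v (rho b (i',j)) + v (rho b (i,j')) * dl (rho b (i',j)) col)"
  unfolding minor_eq by (rule partial_quad)

lemma dl_rho: "dl (rho b p) (rho b q) = (if p = q then 1 else 0)"
  by (simp add: dl_def)

lemma Dfull_vec: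
  assumes "p \<in> Dfull b" "v \<in> p"
  shows "\<exists>x y i0 j0. v = Sv b x y \<and> i0 \<le> 2 \<and> j0 \<le> 1 \<and> x i0 \<noteq> 0 \<and> y j0 \<noteq> 0"
proof -
  have "p \<in> Dsub b {0,1,2} {0,1}" using assms(1) unfolding Dfull_def .
  from Dsub_vec[OF this assms(2)] obtain x y where xy: "v = Sv b x y" "\<exists>i\<in>{0,1,2}. x i \<noteq> 0"
     "\<exists>j\<in>{0,1}. y j \<noteq> 0" by (elim exE conjE) simp
  from xy(2) obtain i0 where "i0 \<in> {0,1,2}" "x i0 \<noteq> 0" by (elim bexE)
  moreover from xy(3) obtain j0 where "j0 \<in> {0,1}" "y j0 \<noteq> 0" by (elim bexE)
  ultimately have "i0 \<le> 2" "j0 \<le> 1" "x i0 \<noteq> 0" "y j0 \<noteq> 0" by auto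
  thus ?thesis using xy(1) by blast
qed

lemma sum4: "(\<Sum>k<(4::nat). g k) = g 0 + g 1 + g 2 + (g 3 :: complex)"
  by (simp add: eval_nat_numeral)

lemma coord_in_Fcoord: "k \<in> P7idx \<Longrightarrow> rho b k \<notin> A \<times> B \<Longrightarrow> (\<lambda>w. w k) \<in> Fcoord b A B"
  unfolding Fcoord_def by (rule rev_image_eqI[of k]) auto

lemma minor_in_Fminor: "i \<le> 2 \<Longrightarrow> i' \<le> 2 \<Longrightarrow> j \<le> 1 \<Longrightarrow> j' \<le> 1 \<Longrightarrow> minor b i i' j j' \<in> Fminor b"
proof -
  assume "i \<le> 2" "i' \<le> 2" "j \<le> 1" "j' \<le> 1"
  hence "(i,i',j,j') \<in> {..2} \<times> {..2} \<times> {..1} \<times> {..1}" by simp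
  thus ?thesis unfolding Fminor_def by (rule rev_image_eqI) simp
qed

lemma vanish_Dfull:
  assumes "f \<in> Fcoord b {0,1,2} {0,1} \<union> Fminor b" "q \<in> Dfull b"
  shows "vanish f q"
  using assms Dsub_closed_eq[of "{0,1,2}" "{0,1}" b] unfolding Dfull_def by auto

lemma Dfull_smooth: "zar_smooth P7idx (Dfull b)"
  unfolding zar_smooth_def zar_dim_Dfull card_P7
proof (intro ballI)
  fix p v assume pv: "p \<in> Dfull b" "v \<in> p"
  obtain x y i0 j0 where xy: "v = Sv b x y" "i0 \<le> 2" "j0 \<le> 1" "x i0 \<noteq> 0" "y j0 \<noteq> 0"
    using Dfull_vec[OF pv] by blast
  define j1 where "j1 = 1 - j0"
  define i1 where "i1 = (if i0 = 0 then 1 else 0::nat)"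
  define i2 where "i2 = (if i0 = 2 then 1 else 2::nat)"
  have ii: "i1 \<le> 2" "i2 \<le> 2" "i0 \<noteq> i1" "i0 \<noteq> i2" "i1 \<noteq> i2" "i1 \<noteq> i0" "i2 \<noteq> i0" "i2 \<noteq> i1"
    unfolding i1_def i2_def using xy(2) by auto
  have jj: "j1 \<le> 1" "j0 \<noteq> j1" "j1 \<noteq> j0" "j0 \<noteq> 2" "j1 \<noteq> 2"
    unfolding j1_def using xy(3) by arith+
  have v0: "v (rho b (i0,j0)) \<noteq> 0"
    using xy Sv_rho[of i0 j0 b x y] by (simp add: Sidx_iff)
  define fs where "fs = [(\<lambda>w. w (rho b (0,2))), (\<lambda>w. w (rho b (1,2))), minor b i0 i1 j0 j1, minor b i0 i2 j0 j1]"
  have k02: "rho b (0,2) \<in> P7idx" "rho b (1,2) \<in> P7idx" by (auto intro!: rho_P7 simp: P7idx_iff)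
  have "set fs \<subseteq> Fcoord b {0,1,2} {0,1} \<union> Fminor b"
    unfolding fs_def using k02 xy(2,3) ii jj
    by (auto intro!: coord_in_Fcoord minor_in_Fminor)
  moreover have "\<forall>f\<in>set fs. \<exists>d. homog P7idx d f"
  proof -
    have h1: "homog P7idx 1 (\<lambda>w. w (rho b (0,2)))" by (rule homog_var[OF k02(1)])
    have h2: "homog P7idx 1 (\<lambda>w. w (rho b (1,2)))" by (rule homog_var[OF k02(2)])
    have h3: "homog P7idx 2 (minor b i0 i1 j0 j1)" by (rule homog_minor) (use xy ii jj in auto)
    have h4: "homog P7idx 2 (minor b i0 i2 j0 j1)" by (rule homog_minor) (use xy ii jj in auto)
    show ?thesis unfolding fs_def using h1 h2 h3 h4 by (simp, blast)
  qed
  ultimately have van: "set fs \<subseteq> vanishing_homog P7idx (Dfull b)"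
    unfolding vanishing_homog_def using vanish_Dfull by blast
  have len: "length fs = 8 - 1 - 3" unfolding fs_def by simp
  have nth: "fs ! 0 = (\<lambda>w. w (rho b (0,2)))" "fs ! 1 = (\<lambda>w. w (rho b (1,2)))"
    "fs ! 2 = minor b i0 i1 j0 j1" "fs ! 3 = minor b i0 i2 j0 j1" unfolding fs_def by simp_all
  have jac: "\<forall>k<length fs. c k = 0" if H: "\<forall>i\<in>P7idx. (\<Sum>k<length fs. c k * partial_fn (fs ! k) i v) = 0" for c
  proof -
    have H': "c 0 * partial_fn (fs!0) col v + c 1 * partial_fn (fs!1) col v + c 2 * partial_fn (fs!2) col v
        + c 3 * partial_fn (fs!3) col v = 0" if "col \<in> P7idx" for col
    proof -
      have "(\<Sum>k<(4::nat). c k * partial_fn (fs ! k) col v) = 0" using H that unfolding len by simp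
      thus ?thesis unfolding sum4 .
    qed
    have c0: "c 0 = 0" using H'[OF k02(1)] jj unfolding nth partial_coord partial_minor dl_rho by simp
    have c1: "c 1 = 0" using H'[OF k02(2)] jj unfolding nth partial_coord partial_minor dl_rho by simp
    have r1: "rho b (i1,j1) \<in> P7idx" using ii jj by (intro rho_Sidx_P7) (simp add: Sidx_iff)
    have r2: "rho b (i2,j1) \<in> P7idx" using ii jj by (intro rho_Sidx_P7) (simp add: Sidx_iff)
    have "c 2 * v (rho b (i0,j0)) = 0"
      using H'[OF r1] ii jj unfolding nth partial_coord partial_minor dl_rho by simp
    hence c2: "c 2 = 0" using v0 by simp
    have "c 3 * v (rho b (i0,j0)) = 0"
      using H'[OF r2] ii jj unfolding nth partial_coord partial_minor dl_rho by simp
    hence c3: "c 3 = 0" using v0 by simp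
    show ?thesis
    proof (intro allI impI)
      fix k assume "k < length fs"
      hence "k = 0 \<or> k = 1 \<or> k = 2 \<or> k = 3" unfolding fs_def by auto
      thus "c k = 0" using c0 c1 c2 c3 by auto
    qed
  qed
  show "\<exists>fs. length fs = 8 - 1 - 3 \<and> set fs \<subseteq> vanishing_homog P7idx (Dfull b) \<and>
      (\<forall>c. (\<forall>i\<in>P7idx. (\<Sum>k<length fs. c k * partial_fn (fs ! k) i v) = 0) \<longrightarrow> (\<forall>k<length fs. c k = 0))"
    using len van jac by blast
qed

definition Dnt :: "bool \<Rightarrow> (nat \<times> nat \<Rightarrow> complex) set set" where
  "Dnt b = {pclass (Sv b x y) | x y. (\<exists>i\<le>2. x i \<noteq> 0) \<and> (\<exists>j\<le>1. y j \<noteq> 0)}"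

lemma Dnt_mem: "p \<in> Dnt b \<longleftrightarrow> (\<exists>x y. p = pclass (Sv b x y) \<and> (\<exists>i\<le>2. x i \<noteq> 0) \<and> (\<exists>j\<le>1. y j \<noteq> 0))"
  unfolding Dnt_def by blast

lemma Sv_cong:
  assumes "\<forall>i\<le>2. x i = x' i" "\<forall>j\<le>1. y j = y' j"
  shows "Sv b x y = Sv b x' y'"
proof
  fix k
  show "Sv b x y k = Sv b x' y' k"
  proof (cases "rho b k \<in> Sidx")
    case True
    then obtain i j where ij: "rho b k = (i,j)" "i \<le> 2" "j \<le> 1" by (cases "rho b k") (auto simp: Sidx_iff)
    thus ?thesis using assms True unfolding Sv_def by simp
  next
    case False thus ?thesis unfolding Sv_def by simp
  qed
qed

lemma Dfull_eq: "Dfull b = Dnt b"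
proof (rule set_eqI; rule iffI)
  fix p assume "p \<in> Dfull b"
  then obtain x y where xy: "p = pclass (Sv b x y)" "\<exists>i\<in>{0,1,2}. x i \<noteq> 0" "\<exists>j\<in>{0,1}. y j \<noteq> 0"
    unfolding Dfull_def Dsub_mem by (elim exE conjE) simp
  from xy(2) obtain i0 where "i0 \<in> {0,1,2}" "x i0 \<noteq> 0" by (elim bexE)
  hence i0: "i0 \<le> 2" "x i0 \<noteq> 0" by auto
  from xy(3) obtain j0 where "j0 \<in> {0,1}" "y j0 \<noteq> 0" by (elim bexE)
  hence j0: "j0 \<le> 1" "y j0 \<noteq> 0" by auto
  show "p \<in> Dnt b" unfolding Dnt_mem using xy(1) i0 j0 by blast
next
  fix p assume "p \<in> Dnt b"
  then obtain x y i0 j0 where xy: "p = pclass (Sv b x y)" "i0 \<le> 2" "x i0 \<noteq> 0" "j0 \<le> 1" "y j0 \<noteq> 0"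
    unfolding Dnt_mem by blast
  define x' where "x' i = (if i \<le> 2 then x i else 0)" for i :: nat
  define y' where "y' j = (if j \<le> 1 then y j else 0)" for j :: nat
  have e: "Sv b x y = Sv b x' y'" by (rule Sv_cong) (simp_all add: x'_def y'_def)
  have s1: "\<forall>i. i \<notin> {0,1,2} \<longrightarrow> x' i = 0" unfolding x'_def by auto
  have s2: "\<forall>j. j \<notin> {0,1} \<longrightarrow> y' j = 0" unfolding y'_def by auto
  have n1: "\<exists>i\<in>{0,1,2}. x' i \<noteq> 0"
  proof -
    have "i0 \<in> {0,1,2}" using xy(2) by auto
    thus ?thesis using xy(2,3) unfolding x'_def by auto
  qed
  have n2: "\<exists>j\<in>{0,1}. y' j \<noteq> 0"
  proof -
    have "j0 \<in> {0,1}" using xy(4) by auto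
    thus ?thesis using xy(4,5) unfolding y'_def by auto
  qed
  have "p = pclass (Sv b x' y') \<and> (\<forall>i. i \<notin> {0,1,2} \<longrightarrow> x' i = 0) \<and> (\<forall>j. j \<notin> {0,1} \<longrightarrow> y' j = 0) \<and>
       (\<exists>i\<in>{0,1,2}. x' i \<noteq> 0) \<and> (\<exists>j\<in>{0,1}. y' j \<noteq> 0)" using xy(1) e s1 s2 n1 n2 by simp
  thus "p \<in> Dfull b" unfolding Dfull_def Dsub_mem by (rule exI[of _ x', OF exI[of _ y']])
qed

lemma segre_Sv: "(\<lambda>(i, j). if (i, j) \<in> Sidx then x i * y j else 0) = Sv False x y"
  by (rule ext) (auto simp: Sv_def rho_def)

lemma segre_eq: "segre_P2P1 = Dnt False"
  unfolding segre_P2P1_def Dnt_def segre_Sv ..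

definition Gm :: "bool \<Rightarrow> (nat \<times> nat \<Rightarrow> complex) \<Rightarrow> (nat \<times> nat \<Rightarrow> complex)" where
  "Gm b v = (\<lambda>k. if k \<in> P7idx then (if rho b k \<in> Sidx then v (rho b k) else 0) else 0)"

definition Hm :: "bool \<Rightarrow> (nat \<times> nat \<Rightarrow> complex) \<Rightarrow> (nat \<times> nat \<Rightarrow> complex)" where
  "Hm b w = (\<lambda>j. if j \<in> Sidx then w (rho b j) else 0)"

definition phi :: "bool \<Rightarrow> (nat \<times> nat \<Rightarrow> complex) set \<Rightarrow> (nat \<times> nat \<Rightarrow> complex) set" where
  "phi b q = pclass (Gm b (SOME v. v \<in> q))"

definition psi :: "bool \<Rightarrow> (nat \<times> nat \<Rightarrow> complex) set \<Rightarrow> (nat \<times> nat \<Rightarrow> complex) set" where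
  "psi b q = pclass (Hm b (SOME v. v \<in> q))"

lemma Gm_scale: "Gm b (\<lambda>k. c * v k) = (\<lambda>k. c * Gm b v k)"
  unfolding Gm_def by auto

lemma Hm_scale: "Hm b (\<lambda>k. c * v k) = (\<lambda>k. c * Hm b v k)"
  unfolding Hm_def by auto

lemma Gm_Sv: "Gm b (Sv False x y) = Sv b x y"
proof
  fix k
  show "Gm b (Sv False x y) k = Sv b x y k"
  proof (cases "rho b k \<in> Sidx")
    case True
    hence "k \<in> P7idx" using Sidx_P7 rho_P7_iff by blast
    thus ?thesis using True unfolding Gm_def Sv_def by (simp add: rho_def)
  next
    case False thus ?thesis unfolding Gm_def Sv_def by simp
  qed
qed

lemma Hm_Sv: "Hm b (Sv b x y) = Sv False x y"
  unfolding Hm_def Sv_def by (rule ext) (simp add: rho_def)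

lemma some_pclass: "\<exists>c. c \<noteq> 0 \<and> (SOME v. v \<in> pclass u) = (\<lambda>i. c * u i)"
proof -
  have "(SOME v. v \<in> pclass u) \<in> pclass u" by (rule someI[of _ u]) (rule pclass_self)
  thus ?thesis unfolding pclass_mem_iff .
qed

lemma phi_pclass: "phi b (pclass u) = pclass (Gm b u)"
proof -
  obtain c where c: "c \<noteq> 0" "(SOME v. v \<in> pclass u) = (\<lambda>i. c * u i)" using some_pclass by blast
  show ?thesis unfolding phi_def c(2) Gm_scale by (rule pclass_scale[OF c(1)])
qed

lemma psi_pclass: "psi b (pclass u) = pclass (Hm b u)"
proof -
  obtain c where c: "c \<noteq> 0" "(SOME v. v \<in> pclass u) = (\<lambda>i. c * u i)" using some_pclass by blast
  show ?thesis unfolding psi_def c(2) Hm_scale by (rule pclass_scale[OF c(1)])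
qed

lemma phi_Sv: "phi b (pclass (Sv False x y)) = pclass (Sv b x y)"
  by (simp add: phi_pclass Gm_Sv)

lemma psi_Sv: "psi b (pclass (Sv b x y)) = pclass (Sv False x y)"
  by (simp add: psi_pclass Hm_Sv)

lemma phi_maps: "p \<in> Dnt False \<Longrightarrow> phi b p \<in> Dnt b"
  unfolding Dnt_mem using phi_Sv by metis

lemma psi_maps: "p \<in> Dnt b \<Longrightarrow> psi b p \<in> Dnt False"
  unfolding Dnt_mem using psi_Sv by metis

lemma psi_phi: "p \<in> Dnt False \<Longrightarrow> psi b (phi b p) = p"
  unfolding Dnt_mem using phi_Sv psi_Sv by metis

lemma phi_psi: "p \<in> Dnt b \<Longrightarrow> phi b (psi b p) = p"
  unfolding Dnt_mem using phi_Sv psi_Sv by metis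

lemma bij_phi: "bij_betw (phi b) (Dnt False) (Dnt b)"
  by (rule bij_betw_byWitness[where f' = "psi b"]) (auto simp: psi_phi phi_psi phi_maps psi_maps)

lemma Dnt_vec:
  assumes "p \<in> Dnt b" "v \<in> p"
  shows "\<exists>x y c i0 j0. p = pclass (Sv b x y) \<and> c \<noteq> 0 \<and> v = (\<lambda>k. c * Sv b x y k) \<and>
     i0 \<le> 2 \<and> j0 \<le> 1 \<and> x i0 \<noteq> 0 \<and> y j0 \<noteq> 0"
proof -
  obtain x y i0 j0 where xy: "p = pclass (Sv b x y)" "i0 \<le> 2" "x i0 \<noteq> 0" "j0 \<le> 1" "y j0 \<noteq> 0"
    using assms(1) unfolding Dnt_mem by blast
  obtain c where "c \<noteq> 0" "v = (\<lambda>k. c * Sv b x y k)" using assms(2) unfolding xy(1) pclass_mem_iff by blast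
  thus ?thesis using xy by blast
qed

lemma Dnt_False_Proj: "Dnt False \<subseteq> Proj Sidx"
proof
  fix p assume "p \<in> Dnt False"
  then obtain x y i0 j0 where xy: "p = pclass (Sv False x y)" "i0 \<le> 2" "x i0 \<noteq> 0" "j0 \<le> 1" "y j0 \<noteq> 0"
    unfolding Dnt_mem by blast
  have "Sv False x y \<in> vecs Sidx" unfolding vecs_def Sv_def rho_def by simp
  moreover have "Sv False x y \<noteq> (\<lambda>_. 0)" using Sv_nonzero xy by blast
  ultimately show "p \<in> Proj Sidx" unfolding Proj_iff xy(1) by blast
qed

lemma Dnt_Proj: "Dnt b \<subseteq> Proj P7idx"
  using Dfull_Proj Dfull_eq by blast

lemma open_self: "zariski_open_in I X X"
  unfolding zariski_open_in_def using closed_empty by blast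

lemma regular_phi: "regular_map Sidx P7idx (Dnt False) (phi b)"
  unfolding regular_map_def
proof (intro conjI ballI)
  show "Dnt False \<subseteq> Proj Sidx" by (rule Dnt_False_Proj)
  show "phi b ` Dnt False \<subseteq> Proj P7idx" using phi_maps Dnt_Proj by blast
  fix p assume p: "p \<in> Dnt False"
  define g :: "nat \<times> nat \<Rightarrow> (nat \<times> nat \<Rightarrow> complex) \<Rightarrow> complex"
    where "g j = (if rho b j \<in> Sidx then (\<lambda>v. v (rho b j)) else (\<lambda>v. 0))" for j
  have gh: "\<forall>j\<in>P7idx. homog Sidx 1 (g j)"
    unfolding g_def using homog_var homog_zero by auto
  have gv: "(\<lambda>j. if j \<in> P7idx then g j v else 0) = Gm b v" for v
    unfolding g_def Gm_def by (rule ext) simp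
  have main: "\<forall>q\<in>Dnt False. \<forall>v\<in>q. (\<lambda>j. if j \<in> P7idx then g j v else 0) \<noteq> (\<lambda>_. 0) \<and>
      phi b q = pclass (\<lambda>j. if j \<in> P7idx then g j v else 0)"
  proof (intro ballI)
    fix q v assume qv: "q \<in> Dnt False" "v \<in> q"
    obtain x y c i0 j0 where d: "q = pclass (Sv False x y)" "c \<noteq> 0" "v = (\<lambda>k. c * Sv False x y k)"
      "i0 \<le> 2" "j0 \<le> 1" "x i0 \<noteq> 0" "y j0 \<noteq> 0" using Dnt_vec[OF qv] by blast
    have G: "Gm b v = (\<lambda>k. c * Sv b x y k)" unfolding d(3) Gm_scale Gm_Sv ..
    have "Sv b x y \<noteq> (\<lambda>_. 0)" using Sv_nonzero d by blast
    hence "Gm b v \<noteq> (\<lambda>_. 0)" unfolding G using d(2) by (metis (mono_tags) ext mult_eq_0_iff)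
    moreover have "phi b q = pclass (Gm b v)" unfolding d(1) phi_Sv G pclass_scale[OF d(2)] ..
    ultimately show "(\<lambda>j. if j \<in> P7idx then g j v else 0) \<noteq> (\<lambda>_. 0) \<and>
      phi b q = pclass (\<lambda>j. if j \<in> P7idx then g j v else 0)" unfolding gv by blast
  qed
  show "\<exists>U g d. zariski_open_in Sidx (Dnt False) U \<and> p \<in> U \<and> (\<forall>j\<in>P7idx. homog Sidx d (g j)) \<and>
      (\<forall>q\<in>U. \<forall>v\<in>q. (\<lambda>j. if j \<in> P7idx then g j v else 0) \<noteq> (\<lambda>_. 0) \<and>
        phi b q = pclass (\<lambda>j. if j \<in> P7idx then g j v else 0))"
    using open_self p gh main by blast
qed

lemma inv_phi: "q \<in> Dnt b \<Longrightarrow> the_inv_into (Dnt False) (phi b) q = psi b q"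
  by (rule the_inv_into_f_eq) (auto simp: phi_psi psi_maps bij_phi[THEN bij_betw_imp_inj_on])

lemma regular_psi: "regular_map P7idx Sidx (Dnt b) (the_inv_into (Dnt False) (phi b))"
  unfolding regular_map_def
proof (intro conjI ballI)
  show "Dnt b \<subseteq> Proj P7idx" by (rule Dnt_Proj)
  show "the_inv_into (Dnt False) (phi b) ` Dnt b \<subseteq> Proj Sidx"
    using inv_phi psi_maps Dnt_False_Proj by auto
  fix p assume p: "p \<in> Dnt b"
  define g :: "nat \<times> nat \<Rightarrow> (nat \<times> nat \<Rightarrow> complex) \<Rightarrow> complex"
    where "g j = (\<lambda>v. v (rho b j))" for j
  have gh: "\<forall>j\<in>Sidx. homog P7idx 1 (g j)"
  proof
    fix j :: "nat \<times> nat" assume j: "j \<in> Sidx"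
    hence "rho b j \<in> P7idx" using Sidx_P7 rho_P7 by blast
    thus "homog P7idx 1 (g j)" unfolding g_def by (rule homog_var)
  qed
  have gv: "(\<lambda>j. if j \<in> Sidx then g j v else 0) = Hm b v" for v
    unfolding g_def Hm_def ..
  have main: "\<forall>q\<in>Dnt b. \<forall>v\<in>q. (\<lambda>j. if j \<in> Sidx then g j v else 0) \<noteq> (\<lambda>_. 0) \<and>
      the_inv_into (Dnt False) (phi b) q = pclass (\<lambda>j. if j \<in> Sidx then g j v else 0)"
  proof (intro ballI)
    fix q v assume qv: "q \<in> Dnt b" "v \<in> q"
    obtain x y c i0 j0 where d: "q = pclass (Sv b x y)" "c \<noteq> 0" "v = (\<lambda>k. c * Sv b x y k)"
      "i0 \<le> 2" "j0 \<le> 1" "x i0 \<noteq> 0" "y j0 \<noteq> 0" using Dnt_vec[OF qv] by blast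
    have H: "Hm b v = (\<lambda>k. c * Sv False x y k)" unfolding d(3) Hm_scale Hm_Sv ..
    have "Sv False x y \<noteq> (\<lambda>_. 0)" using Sv_nonzero d by blast
    hence "Hm b v \<noteq> (\<lambda>_. 0)" unfolding H using d(2) by (metis (mono_tags) ext mult_eq_0_iff)
    moreover have "the_inv_into (Dnt False) (phi b) q = pclass (Hm b v)"
    proof -
      have "the_inv_into (Dnt False) (phi b) q = psi b q" by (rule inv_phi[OF qv(1)])
      also have "\<dots> = pclass (Sv False x y)" unfolding d(1) psi_Sv ..
      also have "\<dots> = pclass (Hm b v)" unfolding H by (rule pclass_scale[OF d(2), symmetric])
      finally show ?thesis .
    qed
    ultimately show "(\<lambda>j. if j \<in> Sidx then g j v else 0) \<noteq> (\<lambda>_. 0) \<and>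
      the_inv_into (Dnt False) (phi b) q = pclass (\<lambda>j. if j \<in> Sidx then g j v else 0)" unfolding gv by blast
  qed
  show "\<exists>U g d. zariski_open_in P7idx (Dnt b) U \<and> p \<in> U \<and> (\<forall>j\<in>Sidx. homog P7idx d (g j)) \<and>
      (\<forall>q\<in>U. \<forall>v\<in>q. (\<lambda>j. if j \<in> Sidx then g j v else 0) \<noteq> (\<lambda>_. 0) \<and>
        the_inv_into (Dnt False) (phi b) q = pclass (\<lambda>j. if j \<in> Sidx then g j v else 0))"
    using open_self p gh main by blast
qed

lemma biregular_Dfull: "biregular Sidx P7idx segre_P2P1 (Dfull b) (phi b)"
  unfolding biregular_def segre_eq Dfull_eq using bij_phi regular_phi regular_psi by blast

lemma coeff2: "coeff [:a,b:] j = (if j = 0 then a else if j = 1 then b else 0)"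
  by (auto simp: coeff_pCons split: nat.split)

lemma coeff3: "coeff [:a,b,c:] j = (if j = 0 then a else if j = 1 then b else if j = 2 then c else 0)"
  by (auto simp: coeff_pCons split: nat.split)

lemma quad_factor: "\<exists>c1 a1 c2 a2. c1*c2 = (x0::complex) \<and> c1*a2 + a1*c2 = x1 \<and> a1*a2 = x2"
proof (cases "x2 = 0")
  case True
  show ?thesis by (rule exI[of _ x0], rule exI[of _ x1], rule exI[of _ 1], rule exI[of _ 0]) (simp add: True)
next
  case False
  define d where "d = csqrt (x1^2 - 4*x0*x2)"
  have d2: "d^2 = x1^2 - 4*x0*x2" unfolding d_def by simp
  have e1: "(x1 - d)/2 * ((x1 + d)/(2*x2)) = x0"
  proof -
    have "(x1 - d)/2 * ((x1 + d)/(2*x2)) = (x1^2 - d^2)/(4*x2)"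
      using False by (simp add: field_simps power2_eq_square)
    also have "\<dots> = x0" using False unfolding d2 by (simp add: field_simps)
    finally show ?thesis .
  qed
  have e2: "(x1 - d)/2 * 1 + x2 * ((x1 + d)/(2*x2)) = x1" using False by (simp add: field_simps)
  show ?thesis
    by (rule exI[of _ "(x1 - d)/2"], rule exI[of _ x2], rule exI[of _ "(x1 + d)/(2*x2)"], rule exI[of _ 1])
       (use e1 e2 in simp)
qed

lemma cv11: "coeffvec [:smult c3 Q, smult b3 Q:] = Sv False (\<lambda>i. coeff Q i) (\<lambda>j. if j = 0 then c3 else b3)"
proof
  fix k :: "nat \<times> nat"
  obtain i j where k: "k = (i,j)" by (cases k)
  show "coeffvec [:smult c3 Q, smult b3 Q:] k = Sv False (\<lambda>i. coeff Q i) (\<lambda>j. if j = 0 then c3 else b3) k"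
  proof (cases "(i,j) \<in> Sidx")
    case True
    hence "i \<le> 2" "j \<le> 1" by (auto simp: Sidx_iff)
    hence "(i,j) \<in> P7idx" "j = 0 \<or> j = 1" by (auto simp: P7idx_iff)
    thus ?thesis using True unfolding k coeffvec_def Sv_def rho_def by (auto simp: coeff2)
  next
    case False
    show ?thesis
    proof (cases "(i,j) \<in> P7idx")
      case True
      hence "j = 2" using False by (auto simp: P7idx_iff Sidx_iff)
      thus ?thesis using False True unfolding k coeffvec_def Sv_def rho_def by (simp add: coeff2)
    next
      case False2: False
      thus ?thesis using False unfolding k coeffvec_def Sv_def rho_def by simp
    qed
  qed
qed

lemma cv1011: "coeffvec [:smult m0 [:l0,l1:], smult m1 [:l0,l1:], smult m2 [:l0,l1:]:] =
   Sv True (\<lambda>j. if j = 0 then m0 else if j = 1 then m1 else m2) (\<lambda>i. coeff [:l0,l1:] i)"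
proof
  fix k :: "nat \<times> nat"
  obtain i j where k: "k = (i,j)" by (cases k)
  have rk: "rho True (i,j) = (j,i)" by (simp add: rho_def)
  show "coeffvec [:smult m0 [:l0,l1:], smult m1 [:l0,l1:], smult m2 [:l0,l1:]:] k =
     Sv True (\<lambda>j. if j = 0 then m0 else if j = 1 then m1 else m2) (\<lambda>i. coeff [:l0,l1:] i) k"
  proof (cases "(j,i) \<in> Sidx")
    case True
    hence "j \<le> 2" "i \<le> 1" by (auto simp: Sidx_iff)
    hence "(i,j) \<in> P7idx" "j = 0 \<or> j = 1 \<or> j = 2" by (auto simp: P7idx_iff)
    thus ?thesis using True unfolding k coeffvec_def Sv_def rk by (auto simp: coeff3 coeff2)
  next
    case False
    show ?thesis
    proof (cases "(i,j) \<in> P7idx")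
      case True
      hence "i = 2" using False by (auto simp: P7idx_iff Sidx_iff)
      thus ?thesis using False True unfolding k coeffvec_def Sv_def rk by (simp add: coeff3 coeff2)
    next
      case False2: False
      thus ?thesis using False unfolding k coeffvec_def Sv_def rk by simp
    qed
  qed
qed

lemma prod11: "[:[:c1,a1:]:] * [:[:c2,a2:]:] * [:[:c3:],[:b3:]:] =
   [:smult c3 [:c1*c2, c1*a2+a1*c2, a1*(a2::complex):], smult b3 [:c1*c2, c1*a2+a1*c2, a1*a2:]:]"
proof -
  have "[:c1,a1:]*[:c2,a2:] = [:c1*c2, c1*a2+a1*c2, a1*(a2::complex):]" by (simp add: algebra_simps)
  moreover have "[:[:c1,a1:]:] * [:[:c2,a2:]:] * [:[:c3:],[:b3:]:] = [:smult c3 ([:c1,a1:]*[:c2,(a2::complex):]), smult b3 ([:c1,a1:]*[:c2,a2:]):]"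
    by (simp add: algebra_simps)
  ultimately show ?thesis by simp
qed

lemma prod1011: "[:[:c1,a1:]:] * [:[:c2:],[:b2:]:] * [:[:c3:],[:b3:]:] =
   [:smult (c2*c3) [:c1,a1:], smult (c2*b3+b2*c3) [:c1,a1:], smult (b2*b3) [:c1,(a1::complex):]:]"
  by (simp add: algebra_simps)

lemma D11_eq: "D_11_0_1 = Dnt False"
proof (rule set_eqI; rule iffI)
  fix p assume "p \<in> D_11_0_1"
  then obtain P a1 c1 a2 c2 b3 c3 where p: "p = pclass (coeffvec P)"
    "P = [:[:c1, a1:]:] * [:[:c2, a2:]:] * [:[:c3:], [:b3:]:]" "P \<noteq> 0"
    unfolding D_11_0_1_def by blast
  define Q where "Q = [:c1*c2, c1*a2+a1*c2, a1*(a2::complex):]"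
  have P: "P = [:smult c3 Q, smult b3 Q:]" unfolding p(2) Q_def prod11 ..
  have Q0: "Q \<noteq> 0" using p(3) unfolding P by auto
  have cb: "c3 \<noteq> 0 \<or> b3 \<noteq> 0" using p(3) unfolding P by auto
  have "\<exists>i\<le>2. coeff Q i \<noteq> 0"
  proof (rule ccontr)
    assume "\<not> (\<exists>i\<le>2. coeff Q i \<noteq> 0)"
    hence "coeff Q 0 = 0" "coeff Q 1 = 0" "coeff Q 2 = 0" by auto
    hence "Q = 0" unfolding Q_def by (simp add: coeff3)
    thus False using Q0 by simp
  qed
  moreover have "\<exists>j\<le>(1::nat). (if j = 0 then c3 else b3) \<noteq> 0"
  proof (cases "c3 = 0")
    case True
    hence "(1::nat) \<le> 1 \<and> (if (1::nat) = 0 then c3 else b3) \<noteq> 0" using cb by simp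
    thus ?thesis by (rule exI[of _ "1::nat"])
  next
    case False
    hence "(0::nat) \<le> 1 \<and> (if (0::nat) = 0 then c3 else b3) \<noteq> 0" by simp
    thus ?thesis by (rule exI[of _ "0::nat"])
  qed
  ultimately show "p \<in> Dnt False" unfolding Dnt_mem p(1) P cv11 by blast
next
  fix p assume "p \<in> Dnt False"
  then obtain x y i0 j0 where xy: "p = pclass (Sv False x y)" "i0 \<le> 2" "x i0 \<noteq> 0" "j0 \<le> 1" "y j0 \<noteq> 0"
    unfolding Dnt_mem by blast
  obtain c1 a1 c2 a2 where f: "c1*c2 = x 0" "c1*a2 + a1*c2 = x 1" "a1*a2 = x 2"
    using quad_factor by blast
  define P where "P = [:[:c1, a1:]:] * [:[:c2, a2:]:] * [:[:y 0:], [:y 1:]:]"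
  define Q where "Q = [:x 0, x 1, x 2:]"
  have P: "P = [:smult (y 0) Q, smult (y 1) Q:]" unfolding P_def Q_def prod11 f ..
  have e: "Sv False (\<lambda>i. coeff Q i) (\<lambda>j. if j = 0 then y 0 else y 1) = Sv False x y"
  proof (rule Sv_cong)
    show "\<forall>i\<le>2. coeff Q i = x i"
    proof (intro allI impI)
      fix i :: nat assume "i \<le> 2" hence "i = 0 \<or> i = 1 \<or> i = 2" by arith
      thus "coeff Q i = x i" unfolding Q_def by (auto simp: coeff3)
    qed
    show "\<forall>j\<le>1. (if j = 0 then y 0 else y 1) = y j"
    proof (intro allI impI)
      fix j :: nat assume "j \<le> 1" hence "j = 0 \<or> j = 1" by arith
      thus "(if j = 0 then y 0 else y 1) = y j" by auto
    qed
  qed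
  have cv: "coeffvec P = Sv False x y" unfolding P cv11 e ..
  have "Q \<noteq> 0"
  proof
    assume "Q = 0"
    hence "x 0 = 0" "x 1 = 0" "x 2 = 0" unfolding Q_def by simp_all
    moreover have "i0 = 0 \<or> i0 = 1 \<or> i0 = 2" using xy(2) by arith
    ultimately show False using xy(3) by auto
  qed
  moreover have "y 0 \<noteq> 0 \<or> y 1 \<noteq> 0"
  proof -
    have "j0 = 0 \<or> j0 = 1" using xy(4) by arith
    thus ?thesis using xy(5) by auto
  qed
  ultimately have "P \<noteq> 0" unfolding P by auto
  thus "p \<in> D_11_0_1" unfolding D_11_0_1_def xy(1) cv[symmetric] P_def by blast
qed

lemma D1011_eq: "D_1_0_11 = Dnt True"
proof (rule set_eqI; rule iffI)
  fix p assume "p \<in> D_1_0_11"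
  then obtain P a1 c1 b2 c2 b3 c3 where p: "p = pclass (coeffvec P)"
    "P = [:[:c1, a1:]:] * [:[:c2:], [:b2:]:] * [:[:c3:], [:b3:]:]" "P \<noteq> 0"
    unfolding D_1_0_11_def by blast
  define m0 where "m0 = c2*c3"
  define m1 where "m1 = c2*b3+b2*c3"
  define m2 where "m2 = b2*b3"
  have P: "P = [:smult m0 [:c1,a1:], smult m1 [:c1,a1:], smult m2 [:c1,a1:]:]"
    unfolding p(2) m0_def m1_def m2_def prod1011 ..
  have L0: "[:c1,a1:] \<noteq> 0" using p(3) unfolding P by auto
  have m: "m0 \<noteq> 0 \<or> m1 \<noteq> 0 \<or> m2 \<noteq> 0" using p(3) unfolding P by auto
  have "\<exists>i\<le>1. coeff [:c1,a1:] i \<noteq> 0"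
  proof (rule ccontr)
    assume "\<not> (\<exists>i\<le>1. coeff [:c1,a1:] i \<noteq> 0)"
    hence "coeff [:c1,a1:] 0 = 0" "coeff [:c1,a1:] 1 = 0" by auto
    hence "[:c1,a1:] = 0" by simp
    thus False using L0 by simp
  qed
  moreover have "\<exists>j\<le>(2::nat). (if j = 0 then m0 else if j = 1 then m1 else m2) \<noteq> 0"
  proof -
    have "(m0 \<noteq> 0 \<longrightarrow> (0::nat) \<le> 2 \<and> (if (0::nat) = 0 then m0 else if (0::nat) = 1 then m1 else m2) \<noteq> 0) \<and>
       (m1 \<noteq> 0 \<longrightarrow> (1::nat) \<le> 2 \<and> (if (1::nat) = 0 then m0 else if (1::nat) = 1 then m1 else m2) \<noteq> 0) \<and>
       (m2 \<noteq> 0 \<longrightarrow> (2::nat) \<le> 2 \<and> (if (2::nat) = 0 then m0 else if (2::nat) = 1 then m1 else m2) \<noteq> 0)" by simp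
    thus ?thesis using m
      by (elim conjE disjE) (drule mp, assumption, erule exI[of _ "0::nat"] exI[of _ "1::nat"] exI[of _ "2::nat"])+
  qed
  ultimately show "p \<in> Dnt True" unfolding Dnt_mem p(1) P cv1011 by blast
next
  fix p assume "p \<in> Dnt True"
  then obtain x y i0 j0 where xy: "p = pclass (Sv True x y)" "i0 \<le> 2" "x i0 \<noteq> 0" "j0 \<le> 1" "y j0 \<noteq> 0"
    unfolding Dnt_mem by blast
  obtain c2 b2 c3 b3 where f: "c2*c3 = x 0" "c2*b3 + b2*c3 = x 1" "b2*b3 = x 2"
    using quad_factor by blast
  define P where "P = [:[:y 0, y 1:]:] * [:[:c2:], [:b2:]:] * [:[:c3:], [:b3:]:]"
  have P: "P = [:smult (x 0) [:y 0, y 1:], smult (x 1) [:y 0, y 1:], smult (x 2) [:y 0, y 1:]:]"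
    unfolding P_def prod1011 f ..
  have e: "Sv True (\<lambda>j. if j = 0 then x 0 else if j = 1 then x 1 else x 2) (\<lambda>i. coeff [:y 0, y 1:] i) = Sv True x y"
  proof (rule Sv_cong)
    show "\<forall>i\<le>2. (if i = 0 then x 0 else if i = 1 then x 1 else x 2) = x i"
    proof (intro allI impI)
      fix i :: nat assume "i \<le> 2" hence "i = 0 \<or> i = 1 \<or> i = 2" by arith
      thus "(if i = 0 then x 0 else if i = 1 then x 1 else x 2) = x i" by auto
    qed
    show "\<forall>j\<le>1. coeff [:y 0, y 1:] j = y j"
    proof (intro allI impI)
      fix j :: nat assume "j \<le> 1" hence "j = 0 \<or> j = 1" by arith
      thus "coeff [:y 0, y 1:] j = y j" by auto
    qed
  qed
  have cv: "coeffvec P = Sv True x y" unfolding P cv1011 e ..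
  have "[:y 0, y 1:] \<noteq> 0"
  proof
    assume "[:y 0, y 1:] = 0"
    hence "y 0 = 0" "y 1 = 0" by simp_all
    moreover have "j0 = 0 \<or> j0 = 1" using xy(4) by arith
    ultimately show False using xy(5) by auto
  qed
  moreover have "x 0 \<noteq> 0 \<or> x 1 \<noteq> 0 \<or> x 2 \<noteq> 0"
  proof -
    have "i0 = 0 \<or> i0 = 1 \<or> i0 = 2" using xy(2) by arith
    thus ?thesis using xy(3) by auto
  qed
  ultimately have "P \<noteq> 0" unfolding P by auto
  thus "p \<in> D_1_0_11" unfolding D_1_0_11_def xy(1) cv[symmetric] P_def by blast
qed

theorem proposition5p3:
  shows "(zariski_closed P7idx D_11_0_1 \<and> (\<exists>\<phi>. biregular Sidx P7idx segre_P2P1 D_11_0_1 \<phi>) \<and>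
          zar_irreducible P7idx D_11_0_1 \<and> zar_smooth P7idx D_11_0_1) \<and>
         (zariski_closed P7idx D_1_0_11 \<and> (\<exists>\<phi>. biregular Sidx P7idx segre_P2P1 D_1_0_11 \<phi>) \<and>
          zar_irreducible P7idx D_1_0_11 \<and> zar_smooth P7idx D_1_0_11)"
proof -
  have a: "D_11_0_1 = Dfull False" unfolding D11_eq Dfull_eq ..
  have b: "D_1_0_11 = Dfull True" unfolding D1011_eq Dfull_eq ..
  show ?thesis unfolding a b
    using Dfull_closed biregular_Dfull Dfull_irreducible Dfull_smooth by blast
qed

end
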